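(* Let $(\Omega,\mathcal{F},Q)$ be a probability space, let $\mathcal{K}\subset L_1(Q)$ be a closed convex cone, and let $\mathcal{K}^\oplus=\{y\in\overline{M}(\Omega,\mathcal{F}):\int xy\,dQ\ge 0\ \text{for all }x\in\mathcal{K}\}$. If $y_0$ solves the problem $\inf_{y\in\mathcal{K}^\oplus}\ln\int e^y\,dQ$, then $$\int y_0e^{y_0}\,dQ=0\quad\text{and}\quad \int y\,e^{y_0}\,dQ\ge 0\ \text{ for all } y\in\mathcal{K}^\oplus.$$
   Context: $\overline{M}(\Omega,\mathcal{F})$ denotes the set of extended-real-valued $\mathcal{F}$-measurable functions on $\Omega$. A cone is a set $K$ with $x\in K\Rightarrow \alpha x\in K$ for all $\alpha\ge 0$. *)

theory Defs
  imports "HOL-Probability.Probability"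
begin

definition eexp :: "ereal \<Rightarrow> ereal" where
  "eexp x = (case x of ereal r \<Rightarrow> ereal (exp r) | PInfty \<Rightarrow> \<infinity> | MInfty \<Rightarrow> 0)"

definition eln :: "ennreal \<Rightarrow> ereal" where
  "eln v = (if v = 0 then -\<infinity> else if v = \<infinity> then \<infinity> else ereal (ln (enn2real v)))"

definition eint_defined :: "'a measure \<Rightarrow> ('a \<Rightarrow> ereal) \<Rightarrow> bool" where
  "eint_defined M f \<longleftrightarrow> f \<in> borel_measurable M \<and>
     ((\<integral>\<^sup>+ w. e2ennreal (f w) \<partial>M) < \<infinity> \<or> (\<integral>\<^sup>+ w. e2ennreal (- f w) \<partial>M) < \<infinity>)"

definition eint :: "'a measure \<Rightarrow> ('a \<Rightarrow> ereal) \<Rightarrow> ereal" where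
  "eint M f = enn2ereal (\<integral>\<^sup>+ w. e2ennreal (f w) \<partial>M) - enn2ereal (\<integral>\<^sup>+ w. e2ennreal (- f w) \<partial>M)"

text \<open>L_1(Q) represented by integrable real functions; closedness w.r.t. the L_1 (semi)norm.\<close>
definition L1_closed :: "'a measure \<Rightarrow> ('a \<Rightarrow> real) set \<Rightarrow> bool" where
  "L1_closed M K \<longleftrightarrow> (\<forall>f g. (\<forall>n. f n \<in> K) \<and> integrable M g \<and>
      (\<forall>n. integrable M (f n)) \<and>
      (\<lambda>n. \<integral>w. \<bar>f n w - g w\<bar> \<partial>M) \<longlonglongrightarrow> 0 \<longrightarrow> g \<in> K)"

definition convex_cone_fun :: "('a \<Rightarrow> real) set \<Rightarrow> bool" where
  "convex_cone_fun K \<longleftrightarrow>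
     (\<forall>x\<in>K. \<forall>a::real. a \<ge> 0 \<longrightarrow> (\<lambda>w. a * x w) \<in> K) \<and>
     (\<forall>x\<in>K. \<forall>y\<in>K. \<forall>t::real. 0 \<le> t \<and> t \<le> 1 \<longrightarrow> (\<lambda>w. t * x w + (1 - t) * y w) \<in> K)"

definition dual_cone :: "'a measure \<Rightarrow> ('a \<Rightarrow> real) set \<Rightarrow> ('a \<Rightarrow> ereal) set" where
  "dual_cone M K = {y \<in> borel_measurable M. \<forall>x\<in>K.
      eint_defined M (\<lambda>w. ereal (x w) * y w) \<and> eint M (\<lambda>w. ereal (x w) * y w) \<ge> 0}"

definition objective :: "'a measure \<Rightarrow> ('a \<Rightarrow> ereal) \<Rightarrow> ereal" where
  "objective M y = eln (\<integral>\<^sup>+ w. e2ennreal (eexp (y w)) \<partial>M)"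

end

theory Submission
  imports Defs "HOL-Probability.Probability"
begin

definition lin_graph :: "('a \<Rightarrow> real) set \<Rightarrow> (('a \<Rightarrow> real) \<Rightarrow> real) \<Rightarrow> ('a \<Rightarrow> real) \<Rightarrow> (('a \<Rightarrow> real) \<times> real) set \<Rightarrow> bool" where
  "lin_graph V p z G \<longleftrightarrow> G \<subseteq> V \<times> UNIV \<and> (\<forall>x a b. (x,a)\<in>G \<longrightarrow> (x,b)\<in>G \<longrightarrow> a = b) \<and>
    (\<forall>x a y b. (x,a)\<in>G \<longrightarrow> (y,b)\<in>G \<longrightarrow> ((\<lambda>v. x v + y v), a + b) \<in> G) \<and>
    (\<forall>x a c. (x,a)\<in>G \<longrightarrow> ((\<lambda>v. c * x v), c * a) \<in> G) \<and>
    (\<forall>x a. (x,a)\<in>G \<longrightarrow> a \<le> p x) \<and> (z, p z) \<in> G"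

lemma lg_V: "lin_graph V p z G \<Longrightarrow> (x,a) \<in> G \<Longrightarrow> x \<in> V"
  unfolding lin_graph_def by blast
lemma lg_fun: "lin_graph V p z G \<Longrightarrow> (x,a) \<in> G \<Longrightarrow> (x,b) \<in> G \<Longrightarrow> a = b"
  unfolding lin_graph_def by blast
lemma lg_add: "lin_graph V p z G \<Longrightarrow> (x,a) \<in> G \<Longrightarrow> (y,b) \<in> G \<Longrightarrow> ((\<lambda>v. x v + y v), a + b) \<in> G"
  unfolding lin_graph_def by blast
lemma lg_sc: "lin_graph V p z G \<Longrightarrow> (x,a) \<in> G \<Longrightarrow> ((\<lambda>v. c * x v), c * a) \<in> G"
  unfolding lin_graph_def by blast
lemma lg_dom: "lin_graph V p z G \<Longrightarrow> (x,a) \<in> G \<Longrightarrow> a \<le> p x"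
  unfolding lin_graph_def by blast
lemma lg_z: "lin_graph V p z G \<Longrightarrow> (z, p z) \<in> G"
  unfolding lin_graph_def by blast

locale hb_setup =
  fixes V :: "('a \<Rightarrow> real) set" and p :: "('a \<Rightarrow> real) \<Rightarrow> real" and z :: "'a \<Rightarrow> real"
  assumes V_add: "\<And>x y. x \<in> V \<Longrightarrow> y \<in> V \<Longrightarrow> (\<lambda>v. x v + y v) \<in> V"
    and V_scale: "\<And>x c. x \<in> V \<Longrightarrow> (\<lambda>v. c * x v) \<in> V"
    and z_V: "z \<in> V"
    and p_add: "\<And>x y. x \<in> V \<Longrightarrow> y \<in> V \<Longrightarrow> p (\<lambda>v. x v + y v) \<le> p x + p y"
    and p_scale: "\<And>x c. x \<in> V \<Longrightarrow> 0 \<le> c \<Longrightarrow> p (\<lambda>v. c * x v) = c * p x"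
begin

lemma p_zero: "p (\<lambda>v. 0) = 0"
  using p_scale[OF z_V, of 0] by simp

lemma p_neg_scale: assumes "x \<in> V" "c < 0" shows "c * p x \<le> p (\<lambda>v. c * x v)"
proof -
  have "p (\<lambda>v. 0) \<le> p (\<lambda>v. c * x v) + p (\<lambda>v. (-c) * x v)"
    using p_add[OF V_scale[OF assms(1)] V_scale[OF assms(1)], of c "-c"] by simp
  moreover have "p (\<lambda>v. (-c) * x v) = (-c) * p x" by (rule p_scale) (use assms in auto)
  ultimately show ?thesis using p_zero by simp
qed

definition G0 where "G0 = {((\<lambda>v. c * z v), c * p z) | c. True}"

lemma G0: "lin_graph V p z G0"
  unfolding lin_graph_def
proof (intro conjI allI impI)
  show "G0 \<subseteq> V \<times> UNIV" using V_scale z_V by (auto simp: G0_def)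
next
  fix x a b assume "(x,a) \<in> G0" "(x,b) \<in> G0"
  then obtain c d where cd: "x = (\<lambda>v. c * z v)" "a = c * p z" "x = (\<lambda>v. d * z v)" "b = d * p z"
    unfolding G0_def by blast
  show "a = b"
  proof (cases "c = d")
    case False
    have e: "c * z v = d * z v" for v using fun_cong[OF trans[OF sym[OF cd(1)] cd(3)], of v] by simp
    have "z = (\<lambda>v. 0 * z v)"
    proof
      fix v show "z v = 0 * z v" using e[of v] False by simp
    qed
    then have "p z = 0" using p_scale[OF z_V, of 0] by simp
    then show ?thesis using cd by simp
  qed (use cd in simp)
next
  fix x a y b assume "(x,a) \<in> G0" "(y,b) \<in> G0"
  then obtain c d where cd: "x = (\<lambda>v. c * z v)" "a = c * p z" "y = (\<lambda>v. d * z v)" "b = d * p z"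
    unfolding G0_def by auto
  show "((\<lambda>v. x v + y v), a + b) \<in> G0" unfolding G0_def
    by (rule CollectI, rule exI[of _ "c + d"]) (simp add: cd algebra_simps)
next
  fix x a e assume "(x,a) \<in> G0"
  then obtain c where cd: "x = (\<lambda>v. c * z v)" "a = c * p z"
    unfolding G0_def by auto
  show "((\<lambda>v. e * x v), e * a) \<in> G0" unfolding G0_def
    by (rule CollectI, rule exI[of _ "e * c"]) (simp add: cd algebra_simps)
next
  fix x a assume "(x,a) \<in> G0"
  then obtain c where cd: "x = (\<lambda>v. c * z v)" "a = c * p z"
    unfolding G0_def by auto
  show "a \<le> p x"
  proof (cases "c < 0")
    case True then show ?thesis using p_neg_scale[OF z_V True] cd by simp
  next
    case False then show ?thesis using p_scale[OF z_V, of c] cd by simp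
  qed
next
  show "(z, p z) \<in> G0" unfolding G0_def by (rule CollectI, rule exI[of _ 1]) simp
qed

lemma chain_union:
  assumes "C \<in> chains {G. lin_graph V p z G}" "C \<noteq> {}"
  shows "lin_graph V p z (\<Union>C)"
proof -
  have CA: "\<And>G. G \<in> C \<Longrightarrow> lin_graph V p z G" and ch: "\<And>G H. G \<in> C \<Longrightarrow> H \<in> C \<Longrightarrow> G \<subseteq> H \<or> H \<subseteq> G"
    using assms(1) unfolding chains_def chain_subset_def by auto
  show ?thesis unfolding lin_graph_def
  proof (intro conjI allI impI)
    show "\<Union>C \<subseteq> V \<times> UNIV"
    proof
      fix q assume "q \<in> \<Union>C"
      then obtain G x a where "G \<in> C" "(x,a) \<in> G" "q = (x,a)" by (cases q) auto
      then show "q \<in> V \<times> UNIV" using lg_V[OF CA] by blast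
    qed
  next
    fix x a b assume "(x,a) \<in> \<Union>C" "(x,b) \<in> \<Union>C"
    then obtain G H where GH: "G \<in> C" "H \<in> C" "(x,a) \<in> G" "(x,b) \<in> H" by auto
    then consider "G \<subseteq> H" | "H \<subseteq> G" using ch by blast
    then show "a = b"
    proof cases
      case 1 then show ?thesis using GH lg_fun[OF CA[of H]] by blast
    next
      case 2 then show ?thesis using GH lg_fun[OF CA[of G]] by blast
    qed
  next
    fix x a y b assume "(x,a) \<in> \<Union>C" "(y,b) \<in> \<Union>C"
    then obtain G H where GH: "G \<in> C" "H \<in> C" "(x,a) \<in> G" "(y,b) \<in> H" by auto
    then consider "G \<subseteq> H" | "H \<subseteq> G" using ch by blast
    then show "((\<lambda>v. x v + y v), a + b) \<in> \<Union>C"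
    proof cases
      case 1 then have "((\<lambda>v. x v + y v), a + b) \<in> H" using GH lg_add[OF CA[of H]] by blast
      then show ?thesis using GH by blast
    next
      case 2 then have "((\<lambda>v. x v + y v), a + b) \<in> G" using GH lg_add[OF CA[of G]] by blast
      then show ?thesis using GH by blast
    qed
  next
    fix x a c assume "(x,a) \<in> \<Union>C"
    then obtain G where "G \<in> C" "(x,a) \<in> G" by auto
    then show "((\<lambda>v. c * x v), c * a) \<in> \<Union>C" using lg_sc[OF CA[of G]] by blast
  next
    fix x a assume "(x,a) \<in> \<Union>C"
    then obtain G where "G \<in> C" "(x,a) \<in> G" by auto
    then show "a \<le> p x" using lg_dom[OF CA[of G]] by blast
  next
    obtain G where "G \<in> C" using assms(2) by auto
    then show "(z, p z) \<in> \<Union>C" using lg_z[OF CA[of G]] by blast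
  qed
qed

lemma extend:
  assumes M: "lin_graph V p z M" and w: "w \<in> V" "w \<notin> fst ` M"
  shows "\<exists>M'. lin_graph V p z M' \<and> M \<subseteq> M' \<and> M' \<noteq> M"
proof -
  note MV = lg_V[OF M] and Mfun = lg_fun[OF M] and Madd = lg_add[OF M] and Msc = lg_sc[OF M]
    and Mdom = lg_dom[OF M] and Mz = lg_z[OF M]
  have M0: "((\<lambda>v. 0), 0) \<in> M" using Msc[OF Mz, of 0] by simp
  have wm: "(\<lambda>v. (-1) * w v) \<in> V" using V_scale w by blast
  define S where "S = {a - p (\<lambda>v. x v - w v) | x a. (x,a) \<in> M}"
  have key: "a - p (\<lambda>v. x v - w v) \<le> p (\<lambda>v. y v + w v) - b" if "(x,a)\<in>M" "(y,b)\<in>M" for x a y b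
  proof -
    have xv: "(\<lambda>v. x v - w v) \<in> V" using V_add[OF MV[OF that(1)] wm] by simp
    have yv: "(\<lambda>v. y v + w v) \<in> V" using V_add[OF MV[OF that(2)] w(1)] by simp
    have "a + b \<le> p (\<lambda>v. x v + y v)" using Mdom[OF Madd[OF that]] .
    also have "(\<lambda>v. x v + y v) = (\<lambda>v. (x v - w v) + (y v + w v))" by auto
    also have "p \<dots> \<le> p (\<lambda>v. x v - w v) + p (\<lambda>v. y v + w v)" using p_add[OF xv yv] .
    finally show ?thesis by simp
  qed
  have Sne: "S \<noteq> {}" using M0 unfolding S_def by blast
  have Sbdd: "bdd_above S" unfolding S_def bdd_above_def using key M0 by blast
  define c where "c = Sup S"
  have c1: "a - p (\<lambda>v. x v - w v) \<le> c" if "(x,a)\<in>M" for x a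
    unfolding c_def by (rule cSup_upper[OF _ Sbdd]) (use that S_def in blast)
  have c2: "c \<le> p (\<lambda>v. y v + w v) - b" if "(y,b)\<in>M" for y b
    unfolding c_def by (rule cSup_least[OF Sne]) (use that key S_def in blast)
  define M' where "M' = {((\<lambda>v. x v + t * w v), a + t * c) | x a t. (x,a) \<in> M}"
  have M'l: "lin_graph V p z M'" unfolding lin_graph_def
  proof (intro conjI allI impI)
    show "M' \<subseteq> V \<times> UNIV"
    proof
      fix q assume "q \<in> M'"
      then obtain x a t where q: "q = ((\<lambda>v. x v + t * w v), a + t * c)" "(x,a) \<in> M"
        unfolding M'_def by blast
      have "(\<lambda>v. x v + t * w v) \<in> V" using V_add[OF MV[OF q(2)] V_scale[OF w(1), of t]] .
      then show "q \<in> V \<times> UNIV" using q(1) by simp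
    qed
  next
    fix x a b assume "(x,a) \<in> M'" "(x,b) \<in> M'"
    then obtain x1 a1 t1 x2 a2 t2 where e: "x = (\<lambda>v. x1 v + t1 * w v)" "a = a1 + t1 * c" "(x1,a1)\<in>M"
      "x = (\<lambda>v. x2 v + t2 * w v)" "b = a2 + t2 * c" "(x2,a2)\<in>M"
      unfolding M'_def by blast
    have eq: "\<And>v. x1 v + t1 * w v = x2 v + t2 * w v" using e(1,4) by metis
    have "t1 = t2"
    proof (rule ccontr)
      assume ne: "t1 \<noteq> t2"
      have d: "((\<lambda>v. x1 v + x2 v * (-1)), a1 + a2 * (-1)) \<in> M"
        using Madd[OF e(3) Msc[OF e(6), of "-1"]] by (simp add: mult.commute)
      have "((\<lambda>v. (1 / (t2 - t1)) * (x1 v + x2 v * (-1))), (1 / (t2 - t1)) * (a1 + a2 * (-1))) \<in> M"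
        using Msc[OF d] .
      moreover have "(\<lambda>v. (1 / (t2 - t1)) * (x1 v + x2 v * (-1))) = w"
      proof
        fix v have "x1 v - x2 v = (t2 - t1) * w v" using eq[of v] by (simp add: algebra_simps)
        then show "(1 / (t2 - t1)) * (x1 v + x2 v * (-1)) = w v" using ne by (simp add: field_simps)
      qed
      ultimately have "w \<in> fst ` M" by (metis fst_conv image_eqI)
      then show False using w by blast
    qed
    then have "x1 = x2" using eq by auto
    then show "a = b" using Mfun e \<open>t1 = t2\<close> by auto
  next
    fix x a y b assume "(x,a) \<in> M'" "(y,b) \<in> M'"
    then obtain x1 a1 t1 x2 a2 t2 where e: "x = (\<lambda>v. x1 v + t1 * w v)" "a = a1 + t1 * c" "(x1,a1)\<in>M"
      "y = (\<lambda>v. x2 v + t2 * w v)" "b = a2 + t2 * c" "(x2,a2)\<in>M"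
      unfolding M'_def by blast
    show "((\<lambda>v. x v + y v), a + b) \<in> M'" unfolding M'_def
      apply (rule CollectI)
      apply (rule exI[of _ "\<lambda>v. x1 v + x2 v"], rule exI[of _ "a1 + a2"], rule exI[of _ "t1 + t2"])
      using Madd[OF e(3) e(6)] by (auto simp: e algebra_simps)
  next
    fix x a e assume "(x,a) \<in> M'"
    then obtain x1 a1 t1 where h: "x = (\<lambda>v. x1 v + t1 * w v)" "a = a1 + t1 * c" "(x1,a1)\<in>M"
      unfolding M'_def by blast
    show "((\<lambda>v. e * x v), e * a) \<in> M'" unfolding M'_def
      apply (rule CollectI)
      apply (rule exI[of _ "\<lambda>v. e * x1 v"], rule exI[of _ "e * a1"], rule exI[of _ "e * t1"])
      using Msc[OF h(3), of e] by (auto simp: h algebra_simps)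
  next
    fix x a assume "(x,a) \<in> M'"
    then obtain x1 a1 t where h: "x = (\<lambda>v. x1 v + t * w v)" "a = a1 + t * c" "(x1,a1)\<in>M"
      unfolding M'_def by blast
    have x1V: "x1 \<in> V" using MV h(3) by blast
    consider "t = 0" | "t > 0" | "t < 0" by linarith
    then show "a \<le> p x"
    proof cases
      case 1 then show ?thesis using Mdom[OF h(3)] h by simp
    next
      case 2
      have m: "((\<lambda>v. (1/t) * x1 v), (1/t) * a1) \<in> M" using Msc[OF h(3)] .
      have "c \<le> p (\<lambda>v. (1/t) * x1 v + w v) - (1/t) * a1" using c2[OF m] .
      then have "t * c \<le> t * p (\<lambda>v. (1/t) * x1 v + w v) - a1" using 2
        by (simp add: field_simps)
      also have "t * p (\<lambda>v. (1/t) * x1 v + w v) = p (\<lambda>v. t * ((1/t) * x1 v + w v))"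
        using p_scale[OF V_add[OF V_scale[OF x1V, of "1/t"] w(1)], of t] 2 by simp
      also have "(\<lambda>v. t * ((1/t) * x1 v + w v)) = x" using 2 h(1) by (auto simp: field_simps)
      finally show ?thesis using h(2) by simp
    next
      case 3
      define s where "s = -t"
      have s: "s > 0" using 3 s_def by simp
      have m: "((\<lambda>v. (1/s) * x1 v), (1/s) * a1) \<in> M" using Msc[OF h(3)] .
      have "(1/s) * a1 - p (\<lambda>v. (1/s) * x1 v - w v) \<le> c" using c1[OF m] .
      then have "a1 - s * p (\<lambda>v. (1/s) * x1 v - w v) \<le> s * c" using s
        by (simp add: field_simps)
      also have "s * p (\<lambda>v. (1/s) * x1 v - w v) = p (\<lambda>v. s * ((1/s) * x1 v - w v))"
        using p_scale[OF V_add[OF V_scale[OF x1V, of "1/s"] wm], of s] s by simp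
      also have "(\<lambda>v. s * ((1/s) * x1 v - w v)) = x" using s h(1) s_def by (auto simp: field_simps)
      finally show ?thesis using h(2) s_def by simp
    qed
  next
    show "(z, p z) \<in> M'" unfolding M'_def
      apply (rule CollectI)
      apply (rule exI[of _ z], rule exI[of _ "p z"], rule exI[of _ 0])
      using Mz by simp
  qed
  have sub: "M \<subseteq> M'"
  proof
    fix q assume "q \<in> M"
    then obtain x a where "q = (x,a)" "(x,a) \<in> M" by (cases q) auto
    then show "q \<in> M'" unfolding M'_def
      apply -
      apply (rule CollectI)
      apply (rule exI[of _ x], rule exI[of _ a], rule exI[of _ 0])
      by simp
  qed
  have wc: "(w, c) \<in> M'" unfolding M'_def
      apply (rule CollectI)
      apply (rule exI[of _ "\<lambda>v. 0"], rule exI[of _ 0], rule exI[of _ 1])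
      using M0 by simp
  have "M' \<noteq> M"
  proof
    assume "M' = M"
    then have "(w,c) \<in> M" using wc by simp
    then have "w \<in> fst ` M" by (metis fst_conv image_eqI)
    with w(2) show False by simp
  qed
  then show ?thesis using M'l sub by blast
qed

theorem hahn_banach:
  "\<exists>\<phi>. (\<forall>x\<in>V. \<forall>y\<in>V. \<phi> (\<lambda>v. x v + y v) = \<phi> x + \<phi> y) \<and>
       (\<forall>x\<in>V. \<forall>c. \<phi> (\<lambda>v. c * x v) = c * \<phi> x) \<and>
       (\<forall>x\<in>V. \<phi> x \<le> p x) \<and> \<phi> z = p z"
proof -
  have "\<exists>M\<in>{G. lin_graph V p z G}. \<forall>X\<in>{G. lin_graph V p z G}. M \<subseteq> X \<longrightarrow> X = M"
  proof (rule Zorn_Lemma2, intro ballI)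
    fix C assume C: "C \<in> chains {G. lin_graph V p z G}"
    show "\<exists>U\<in>{G. lin_graph V p z G}. \<forall>S\<in>C. S \<subseteq> U"
    proof (cases "C = {}")
      case True show ?thesis by (rule bexI[of _ G0]) (use True G0 in auto)
    next
      case False show ?thesis by (rule bexI[of _ "\<Union>C"]) (use chain_union[OF C False] in auto)
    qed
  qed
  then obtain M where M0: "M \<in> {G. lin_graph V p z G}" and max0: "\<forall>X\<in>{G. lin_graph V p z G}. M \<subseteq> X \<longrightarrow> X = M"
    by (rule bexE)
  have M: "lin_graph V p z M" using M0 by simp
  have max: "\<And>X. lin_graph V p z X \<Longrightarrow> M \<subseteq> X \<Longrightarrow> X = M" using max0 by simp
  note MV = lg_V[OF M] and Mfun = lg_fun[OF M] and Madd = lg_add[OF M] and Msc = lg_sc[OF M]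
    and Mdom = lg_dom[OF M] and Mz = lg_z[OF M]
  have dom: "\<And>x. x \<in> V \<Longrightarrow> \<exists>a. (x,a) \<in> M"
  proof (rule ccontr)
    fix x assume "x \<in> V" and nx: "\<not> (\<exists>a. (x,a) \<in> M)"
    have "x \<notin> fst ` M"
    proof
      assume "x \<in> fst ` M"
      then obtain q where "q \<in> M" "x = fst q" by blast
      then show False using nx by (metis prod.collapse)
    qed
    then show False using extend[OF M \<open>x \<in> V\<close>] max by blast
  qed
  define \<phi> where "\<phi> x = (THE a. (x,a) \<in> M)" for x
  have phi_eq: "\<phi> x = a" if "(x,a) \<in> M" for x a
    unfolding \<phi>_def by (rule the_equality[where P="\<lambda>a. (x,a) \<in> M", OF that]) (use Mfun that in blast)
  have phi: "(x, \<phi> x) \<in> M" if "x \<in> V" for x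
  proof -
    obtain a where a: "(x,a) \<in> M" using dom \<open>x \<in> V\<close> by blast
    then show ?thesis using phi_eq[OF a] by simp
  qed
  show ?thesis
  proof (intro exI[of _ \<phi>] conjI ballI allI)
    fix x y assume "x \<in> V" "y \<in> V"
    then show "\<phi> (\<lambda>v. x v + y v) = \<phi> x + \<phi> y" using phi_eq[OF Madd[OF phi phi]] by simp
  next
    fix x c assume "x \<in> V"
    then show "\<phi> (\<lambda>v. c * x v) = c * \<phi> x" using phi_eq[OF Msc[OF phi]] by simp
  next
    fix x assume "x \<in> V"
    then show "\<phi> x \<le> p x" using Mdom[OF phi] by simp
  next
    show "\<phi> z = p z" using phi_eq[OF Mz] .
  qed
qed

end

lemma exp_quad_bound:
  fixes u :: real assumes "\<bar>u\<bar> \<le> 1" shows "exp u \<le> 1 + u + u\<^sup>2"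
proof (cases "u \<ge> 0")
  case True then show ?thesis using exp_bound[of u] assms by simp
next
  case False
  then have u: "u < 0" by simp
  have e: "1 - u \<le> exp (-u)" using exp_ge_add_one_self[of "-u"] by simp
  have "exp u = inverse (exp (-u))" by (simp add: exp_minus)
  also have "\<dots> \<le> inverse (1 - u)" using e u by (intro le_imp_inverse_le) auto
  also have "\<dots> \<le> 1 + u + u\<^sup>2"
  proof -
    have id: "(1 - u) * (1 + u + u\<^sup>2) = 1 - u * u\<^sup>2" by (simp add: algebra_simps power2_eq_square)
    have "u\<^sup>2 > 0" using u by simp
    then have "u * u\<^sup>2 < 0" by (rule mult_neg_pos[OF u])
    then have "1 \<le> (1 - u) * (1 + u + u\<^sup>2)" using id by simp
    then show ?thesis using u by (simp add: field_simps)
  qed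
  finally show ?thesis .
qed

lemma exp_tangent:
  fixes t u :: real shows "exp (t * u) * (1 + (1 - t) * u) \<le> exp u"
proof -
  have "1 + (1 - t) * u \<le> exp ((1 - t) * u)" by (rule exp_ge_add_one_self)
  then have "exp (t * u) * (1 + (1 - t) * u) \<le> exp (t * u) * exp ((1 - t) * u)"
    by (intro mult_left_mono) auto
  also have "\<dots> = exp u" by (simp add: exp_add[symmetric] algebra_simps)
  finally show ?thesis .
qed

lemma exp_sq_bound:
  fixes v :: real assumes "0 \<le> v" shows "v\<^sup>2 \<le> 8 * exp (v / 2)"
proof -
  have "1 + v/2 + (v/2)\<^sup>2 / 2 \<le> exp (v/2)" using exp_lower_Taylor_quadratic[of "v/2"] assms by simp
  then show ?thesis using assms by (simp add: power2_eq_square field_simps)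
qed

lemma neg_part_bound:
  fixes v t :: real assumes v: "0 \<le> v" and t: "1/2 \<le> t" "t \<le> 1"
  shows "v * exp (-(t * v)) \<le> v * exp (-v) + 8 * (1 - t)"
proof -
  have a: "1 - exp (-((1 - t) * v)) \<le> (1 - t) * v"
    using exp_ge_add_one_self[of "-((1 - t) * v)"] by simp
  have eq: "v * exp (-(t * v)) - v * exp (-v) = v * exp (-(t * v)) * (1 - exp (-((1 - t) * v)))"
    by (simp add: algebra_simps exp_add[symmetric])
  have b1: "v * exp (-(t * v)) * (1 - exp (-((1 - t) * v))) \<le> v * exp (-(t * v)) * ((1 - t) * v)"
    using a v by (intro mult_left_mono) auto
  have b2: "v * exp (-(t * v)) * ((1 - t) * v) = (1 - t) * (v\<^sup>2 * exp (-(t * v)))" by (simp add: power2_eq_square algebra_simps)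
  have b3: "v\<^sup>2 * exp (-(t * v)) \<le> v\<^sup>2 * exp (-(v / 2))"
  proof -
    have "(1/2) * v \<le> t * v" using mult_right_mono[of "1/2" t v] v t by simp
    then have "exp (-(t * v)) \<le> exp (-(v / 2))" by simp
    then show ?thesis by (intro mult_left_mono) auto
  qed
  have b4: "v\<^sup>2 * exp (-(v / 2)) \<le> 8"
  proof -
    have "v\<^sup>2 \<le> 8 * exp (v / 2)" by (rule exp_sq_bound[OF v])
    then have "v\<^sup>2 * exp (-(v / 2)) \<le> 8 * exp (v / 2) * exp (-(v / 2))" by (intro mult_right_mono) auto
    also have "\<dots> = 8" by (simp add: exp_minus)
    finally show ?thesis .
  qed
  have "(1 - t) * (v\<^sup>2 * exp (-(t * v))) \<le> (1 - t) * 8"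
    using b3 b4 t by (intro mult_left_mono) auto
  then show ?thesis using eq b1 b2 by linarith
qed

lemma exp_scale_bound:
  fixes t u :: real assumes "0 \<le> t" "t \<le> 1" shows "exp (t * u) \<le> 1 + exp u"
proof (cases "u \<ge> 0")
  case True
  then have "t * u \<le> u" using assms by (simp add: mult_left_le_one_le)
  then show ?thesis by (smt (verit) exp_le_cancel_iff exp_ge_zero)
next
  case False
  then have "t * u \<le> 0" using assms by (simp add: mult_nonneg_nonpos)
  then show ?thesis by (smt (verit) exp_le_one_iff exp_ge_zero)
qed

lemma pos_part_mono:
  fixes s t u :: real assumes "0 \<le> u" "s \<le> t" shows "u * exp (s * u) \<le> u * exp (t * u)"
  using assms by (intro mult_left_mono) (auto intro: mult_right_mono)


lemma ennreal_cancel: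
  fixes a b c :: ennreal assumes "c \<noteq> top" "a + c \<le> b + c" shows "a \<le> b"
proof -
  obtain r where r: "0 \<le> r" "c = ennreal r" using assms(1) by (cases c rule: ennreal_cases) auto
  show ?thesis
  proof (cases b rule: ennreal_cases)
    case (real y)
    then have "a + c \<noteq> top" using assms r by (metis ennreal_plus top_neq_ennreal top_unique ennreal_neq_top)
    then obtain x where x: "0 \<le> x" "a = ennreal x" by (cases a rule: ennreal_cases) auto
    have e1: "ennreal (x + r) = ennreal x + ennreal r" using x(1) r(1) by (rule ennreal_plus)
    have e2: "ennreal (y + r) = ennreal y + ennreal r" using real(1) r(1) by (rule ennreal_plus)
    have "ennreal (x + r) \<le> ennreal (y + r)" unfolding e1 e2 using assms(2) x(2) r(2) real(2) by simp
    then have "x + r \<le> y + r" using ennreal_le_iff[of "y+r" "x+r"] add_nonneg_nonneg[OF real(1) r(1)] by blast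
    then show ?thesis using x real by (simp add: ennreal_leI)
  qed simp
qed

definition epos :: "'a measure \<Rightarrow> ('a \<Rightarrow> ereal) \<Rightarrow> ennreal" where
  "epos M F = (\<integral>\<^sup>+ w. e2ennreal (F w) \<partial>M)"
definition eneg :: "'a measure \<Rightarrow> ('a \<Rightarrow> ereal) \<Rightarrow> ennreal" where
  "eneg M F = (\<integral>\<^sup>+ w. e2ennreal (- F w) \<partial>M)"

lemma eint_nonneg_iff:
  assumes "F \<in> borel_measurable M"
  shows "(eint_defined M F \<and> 0 \<le> eint M F) \<longleftrightarrow> (eneg M F < \<infinity> \<and> eneg M F \<le> epos M F)"
proof -
  have d: "eint_defined M F \<longleftrightarrow> (epos M F < \<infinity> \<or> eneg M F < \<infinity>)"
    using assms unfolding eint_defined_def epos_def eneg_def by simp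
  have e: "eint M F = enn2ereal (epos M F) - enn2ereal (eneg M F)"
    unfolding eint_def epos_def eneg_def by simp
  show ?thesis
  proof (cases "eneg M F" rule: ennreal_cases)
    case (real n)
    show ?thesis
    proof (cases "epos M F" rule: ennreal_cases)
      case (real p)
      then show ?thesis using d e \<open>0 \<le> n\<close> \<open>eneg M F = ennreal n\<close> by (simp add: ennreal_le_iff)
    next
      case top
      then show ?thesis using d e \<open>0 \<le> n\<close> \<open>eneg M F = ennreal n\<close> by simp
    qed
  next
    case top
    note nt = top
    show ?thesis
    proof (cases "epos M F" rule: ennreal_cases)
      case (real p)
      then show ?thesis using d e nt by simp
    next
      case top
      then show ?thesis using d e nt by simp
    qed
  qed
qed

lemma eint_zero:
  assumes "F \<in> borel_measurable M" "eneg M F < \<infinity>" "epos M F = eneg M F"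
  shows "eint_defined M F \<and> eint M F = 0"
proof -
  obtain n where n: "0 \<le> n" "eneg M F = ennreal n" using assms(2) by (cases "eneg M F" rule: ennreal_cases) auto
  show ?thesis using assms n unfolding eint_defined_def eint_def epos_def eneg_def by simp
qed

lemma eint_cong_AE:
  assumes "F \<in> borel_measurable M" "G \<in> borel_measurable M" "AE w in M. F w = G w"
  shows "eint_defined M F = eint_defined M G" "eint M F = eint M G"
    "epos M F = epos M G" "eneg M F = eneg M G"
proof -
  show p: "epos M F = epos M G" unfolding epos_def
    by (rule nn_integral_cong_AE) (use assms(3) in auto)
  show n: "eneg M F = eneg M G" unfolding eneg_def
    by (rule nn_integral_cong_AE) (use assms(3) in auto)
  show "eint M F = eint M G" using p n unfolding eint_def epos_def eneg_def by simp
  show "eint_defined M F = eint_defined M G"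
    using p n assms(1,2) unfolding eint_defined_def epos_def eneg_def by simp
qed

lemma eint_AE_zero:
  assumes "F \<in> borel_measurable M" "AE w in M. F w = 0"
  shows "eint_defined M F \<and> eint M F = 0"
proof -
  have "epos M F = epos M (\<lambda>w. 0)" "eneg M F = eneg M (\<lambda>w. 0)"
    using eint_cong_AE[OF assms(1) _ assms(2)] by auto
  then have "epos M F = 0" "eneg M F = 0" unfolding epos_def eneg_def by auto
  then show ?thesis using eint_zero[OF assms(1)] by simp
qed

lemma eexp_simps[simp]: "eexp (ereal r) = ereal (exp r)" "eexp \<infinity> = \<infinity>" "eexp (-\<infinity>) = 0"
  by (simp_all add: eexp_def)

lemma eexp_mono: "mono eexp"
proof
  fix x y :: ereal assume "x \<le> y"
  then show "eexp x \<le> eexp y" by (cases x; cases y) auto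
qed

lemma eexp_meas[measurable]: assumes "f \<in> borel_measurable M" shows "(\<lambda>w. eexp (f w)) \<in> borel_measurable M"
proof (rule borel_measurable_ereal_cases[OF assms])
  have "(\<lambda>x. ereal (exp (real_of_ereal (f x)))) \<in> borel_measurable M" using assms by measurable
  then show "(\<lambda>x. eexp (ereal (real_of_ereal (f x)))) \<in> borel_measurable M" by simp
qed

lemma eexp_nonneg: "0 \<le> eexp x" by (cases x) auto

lemma eexp_zero_iff: "eexp x = 0 \<longleftrightarrow> x = -\<infinity>" by (cases x) auto

lemma eln_ennreal: "0 < r \<Longrightarrow> eln (ennreal r) = ereal (ln r)"
  unfolding eln_def by simp

lemma eln_le_imp:
  assumes "0 < a" "a < \<infinity>" "eln a \<le> eln b" shows "a \<le> b"
proof -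
  obtain r where r: "0 < r" "a = ennreal r" using assms(1,2)
    by (cases a rule: ennreal_cases) (auto simp: ennreal_less_zero_iff)
  show ?thesis
  proof (cases b rule: ennreal_cases)
    case (real s)
    show ?thesis
    proof (cases "s = 0")
      case True
      then show ?thesis using assms(3) r real by (simp add: eln_def)
    next
      case False
      then have "0 < s" using real by simp
      then have "ln r \<le> ln s" using assms(3) r real by (simp add: eln_ennreal)
      then have "r \<le> s" using r \<open>0 < s\<close> by simp
      then show ?thesis using r real by (simp add: ennreal_leI)
    qed
  qed simp
qed

lemma eln_le0: "eln a \<le> 0 \<Longrightarrow> a \<noteq> \<infinity>"
  unfolding eln_def by auto

lemma eln_minf: "eln a \<le> -\<infinity> \<Longrightarrow> a = 0"
  unfolding eln_def by (auto split: if_splits)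

lemma pw_add: "ereal r * (a + ereal s) = ereal r * a + ereal (r * s)"
  by (cases a) (auto simp: algebra_simps)

lemma pw_scale: "ereal x * (ereal t * a) = ereal t * (ereal x * a)"
  by (simp add: ac_simps)

lemma e2_scale: "0 \<le> t \<Longrightarrow> e2ennreal (ereal t * a) = ennreal t * e2ennreal a"
proof (cases a)
  case (real r)
  assume t: "0 \<le> t"
  show ?thesis
  proof (cases "r \<ge> 0")
    case True then show ?thesis using real t by (simp add: ennreal_mult)
  next
    case False
    then have "t * r \<le> 0" using t by (simp add: mult_nonneg_nonpos)
    then show ?thesis using real False by (simp add: ennreal_neg)
  qed
next
  case PInf
  assume t: "0 \<le> t"
  then show ?thesis using PInf by (cases "t = 0") (auto simp: ennreal_mult_top)
next
  case MInf
  assume t: "0 \<le> t"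
  then show ?thesis using MInf by (cases "t = 0") (auto simp: e2ennreal_neg)
qed

lemma ennreal_max0: "ennreal x = ennreal (max x 0)"
  by (simp add: max_def ennreal_neg)

lemma max0_abs: "max x (0::real) = (x + \<bar>x\<bar>) / 2" by (simp add: max_def)

lemma e2_ident:
  "e2ennreal (F + ereal g) + e2ennreal (- F) + ennreal (- g) = e2ennreal (- (F + ereal g)) + e2ennreal F + ennreal g"
proof (cases F)
  case (real r)
  have m: "\<And>x::real. ennreal x = ennreal (max x 0)" by (rule ennreal_max0)
  have L: "ennreal (r+g) + ennreal (-r) + ennreal (-g) = ennreal (max (r+g) 0 + max (-r) 0 + max (-g) 0)"
    by (simp only: m[of "r+g"] m[of "-r"] m[of "-g"] ennreal_plus[symmetric, OF max.cobounded2 max.cobounded2]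
        ennreal_plus[symmetric, OF add_nonneg_nonneg[OF max.cobounded2 max.cobounded2] max.cobounded2])
  have R: "ennreal (-(r+g)) + ennreal r + ennreal g = ennreal (max (-(r+g)) 0 + max r 0 + max g 0)"
    by (simp only: m[of "-(r+g)"] m[of "r"] m[of "g"] ennreal_plus[symmetric, OF max.cobounded2 max.cobounded2]
        ennreal_plus[symmetric, OF add_nonneg_nonneg[OF max.cobounded2 max.cobounded2] max.cobounded2])
  have "max (r+g) 0 + max (-r) 0 + max (-g) 0 = max (-(r+g)) 0 + max r 0 + max g 0"
    by (simp only: max0_abs) (simp add: abs_minus_cancel field_simps)
  then have X: "ennreal (r+g) + ennreal (-r) + ennreal (-g) = ennreal (-(r+g)) + ennreal r + ennreal g"
    using L R by simp
  show ?thesis unfolding real plus_ereal.simps(1) uminus_ereal.simps(1) e2ennreal_ereal by (rule X)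
next
  case PInf then show ?thesis by (simp add: e2ennreal_neg)
next
  case MInf then show ?thesis by (simp add: e2ennreal_neg)
qed

lemma e2_neg_sub: "e2ennreal (- (F + ereal g)) \<le> e2ennreal (- F) + ennreal (- g)"
proof (cases F)
  case (real r)
  have m: "\<And>x::real. ennreal x = ennreal (max x 0)" by (rule ennreal_max0)
  have R: "ennreal (-r) + ennreal (-g) = ennreal (max (-r) 0 + max (-g) 0)"
    by (simp only: m[of "-r"] m[of "-g"] ennreal_plus[symmetric, OF max.cobounded2 max.cobounded2])
  have B: "ennreal (max (-(r+g)) 0) \<le> ennreal (max (-r) 0 + max (-g) 0)"
    by (rule ennreal_leI) (simp only: max0_abs, simp add: field_simps, smt (verit) abs_triangle_ineq)
  have X: "ennreal (-(r+g)) \<le> ennreal (-r) + ennreal (-g)"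
  proof -
    have "ennreal (-(r+g)) = ennreal (max (-(r+g)) 0)" by (rule m)
    also have "\<dots> \<le> ennreal (max (-r) 0 + max (-g) 0)" by (rule B)
    also have "\<dots> = ennreal (-r) + ennreal (-g)" using R by (rule sym)
    finally show ?thesis .
  qed
  show ?thesis unfolding real plus_ereal.simps(1) uminus_ereal.simps(1) e2ennreal_ereal by (rule X)
next
  case PInf then show ?thesis by (simp add: e2ennreal_neg)
next
  case MInf then show ?thesis by (simp add: e2ennreal_neg)
qed


lemma sep_functional:
  fixes Q :: "'a measure" and K :: "('a \<Rightarrow> real) set" and z :: "'a \<Rightarrow> real"
  assumes Q: "prob_space Q" and KI: "K \<subseteq> {x::'a\<Rightarrow>real. integrable Q x}" and cl: "L1_closed Q K"
    and cc: "convex_cone_fun K" and Kne: "K \<noteq> {}" and zI: "integrable Q z" and zK: "z \<notin> K"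
  shows "\<exists>\<phi>::('a \<Rightarrow> real) \<Rightarrow> real. (\<forall>x y. integrable Q x \<longrightarrow> integrable Q y \<longrightarrow> \<phi> (\<lambda>v. x v + y v) = \<phi> x + \<phi> y) \<and>
       (\<forall>x c. integrable Q x \<longrightarrow> \<phi> (\<lambda>v. c * x v) = c * \<phi> x) \<and>
       (\<forall>x. integrable Q x \<longrightarrow> \<bar>\<phi> x\<bar> \<le> (\<integral>w. \<bar>x w\<bar> \<partial>Q)) \<and>
       (\<forall>k\<in>K. \<phi> k \<le> 0) \<and> \<phi> z > 0"
proof -
  interpret prob_space Q by (rule Q)
  have ccs: "\<And>x a. x \<in> K \<Longrightarrow> a \<ge> 0 \<Longrightarrow> (\<lambda>w. a * x w) \<in> K"
    and ccc: "\<And>x y t. x \<in> K \<Longrightarrow> y \<in> K \<Longrightarrow> 0 \<le> t \<Longrightarrow> t \<le> 1 \<Longrightarrow> (\<lambda>w. t * x w + (1 - t) * y w) \<in> K"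
    using cc unfolding convex_cone_fun_def by auto
  obtain k0 where "k0 \<in> K" using Kne by blast
  have K0: "(\<lambda>w. 0) \<in> K" using ccs[OF \<open>k0 \<in> K\<close>, of 0] by simp
  have Kadd: "(\<lambda>w. k1 w + k2 w) \<in> K" if "k1 \<in> K" "k2 \<in> K" for k1 k2
  proof -
    have "(\<lambda>w. (1/2) * k1 w + (1 - 1/2) * k2 w) \<in> K" using ccc[OF that, of "1/2"] by simp
    from ccs[OF this, of 2] show ?thesis by (simp add: algebra_simps)
  qed
  have KI': "\<And>k. k \<in> K \<Longrightarrow> integrable Q k" using KI by blast
  define p where "p x = Inf ((\<lambda>k. \<integral>w. \<bar>x w - k w\<bar> \<partial>Q) ` K)" for x
  have bdd: "bdd_below ((\<lambda>k. \<integral>w. \<bar>x w - k w\<bar> \<partial>Q) ` K)" for x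
    by (rule bdd_belowI[of _ 0]) auto
  have plow: "p x \<le> (\<integral>w. \<bar>x w - k w\<bar> \<partial>Q)" if "k \<in> K" for x k
    unfolding p_def by (rule cInf_lower[OF _ bdd]) (use that in blast)
  have pgreat: "c \<le> p x" if "\<And>k. k \<in> K \<Longrightarrow> c \<le> (\<integral>w. \<bar>x w - k w\<bar> \<partial>Q)" for c x
    unfolding p_def by (rule cInf_greatest) (use Kne that in auto)
  have pnn: "0 \<le> p x" for x by (rule pgreat) auto
  have pabs: "p x \<le> (\<integral>w. \<bar>x w\<bar> \<partial>Q)" for x using plow[OF K0, of x] by simp
  have p_add: "p (\<lambda>v. x v + y v) \<le> p x + p y" if xI: "integrable Q x" and yI: "integrable Q y" for x y
  proof -
    have *: "p (\<lambda>v. x v + y v) \<le> (\<integral>w. \<bar>x w - k1 w\<bar> \<partial>Q) + (\<integral>w. \<bar>y w - k2 w\<bar> \<partial>Q)"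
      if k: "k1 \<in> K" "k2 \<in> K" for k1 k2
    proof -
      have "p (\<lambda>v. x v + y v) \<le> (\<integral>w. \<bar>(x w + y w) - (k1 w + k2 w)\<bar> \<partial>Q)"
        using plow[OF Kadd[OF k]] by simp
      also have "\<dots> \<le> (\<integral>w. \<bar>x w - k1 w\<bar> + \<bar>y w - k2 w\<bar> \<partial>Q)"
        by (rule integral_mono) (use xI yI KI'[OF k(1)] KI'[OF k(2)] in auto)
      also have "\<dots> = (\<integral>w. \<bar>x w - k1 w\<bar> \<partial>Q) + (\<integral>w. \<bar>y w - k2 w\<bar> \<partial>Q)"
        by (rule Bochner_Integration.integral_add) (use xI yI KI'[OF k(1)] KI'[OF k(2)] in auto)
      finally show ?thesis .
    qed
    have "p (\<lambda>v. x v + y v) - (\<integral>w. \<bar>y w - k2 w\<bar> \<partial>Q) \<le> p x" if "k2 \<in> K" for k2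
      by (rule pgreat) (use *[OF _ that] in force)
    then have "p (\<lambda>v. x v + y v) - p x \<le> p y"
      by (intro pgreat) force
    then show ?thesis by simp
  qed
  have p_scale: "p (\<lambda>v. c * x v) = c * p x" if xI: "integrable Q x" and c: "0 \<le> c" for x c
  proof (cases "c = 0")
    case True
    have "p (\<lambda>v. 0) \<le> 0" using plow[OF K0, of "\<lambda>v. 0"] by simp
    then show ?thesis using True pnn[of "\<lambda>v. 0"] by simp
  next
    case False
    then have cpos: "c > 0" using c by simp
    have eq: "(\<integral>w. \<bar>c * a w - c * b w\<bar> \<partial>Q) = c * (\<integral>w. \<bar>a w - b w\<bar> \<partial>Q)" for a b
    proof -
      have "(\<lambda>w. \<bar>c * a w - c * b w\<bar>) = (\<lambda>w. c * \<bar>a w - b w\<bar>)"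
        using cpos by (auto simp: abs_mult right_diff_distrib[symmetric])
      then show ?thesis by simp
    qed
    have "p (\<lambda>v. c * x v) / c \<le> p x"
    proof (rule pgreat)
      fix k assume k: "k \<in> K"
      have "p (\<lambda>v. c * x v) \<le> (\<integral>w. \<bar>c * x w - c * k w\<bar> \<partial>Q)"
        using plow[OF ccs[OF k c]] by simp
      also have "\<dots> = c * (\<integral>w. \<bar>x w - k w\<bar> \<partial>Q)" by (rule eq)
      finally show "p (\<lambda>v. c * x v) / c \<le> (\<integral>w. \<bar>x w - k w\<bar> \<partial>Q)" using cpos
        by (simp add: divide_le_eq mult.commute)
    qed
    moreover have "c * p x \<le> p (\<lambda>v. c * x v)"
    proof (rule pgreat)
      fix k assume k: "k \<in> K"
      have ck: "(\<lambda>w. (1/c) * k w) \<in> K" using ccs[OF k, of "1/c"] cpos by simp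
      have "p x \<le> (\<integral>w. \<bar>x w - (1/c) * k w\<bar> \<partial>Q)" using plow[OF ck] by simp
      also have "(\<integral>w. \<bar>x w - (1/c) * k w\<bar> \<partial>Q) = (1/c) * (\<integral>w. \<bar>c * x w - k w\<bar> \<partial>Q)"
      proof -
        have "(\<lambda>w. \<bar>x w - (1/c) * k w\<bar>) = (\<lambda>w. (1/c) * \<bar>c * x w - k w\<bar>)"
          using cpos by (auto simp: abs_mult field_simps)
        then show ?thesis by simp
      qed
      finally show "c * p x \<le> (\<integral>w. \<bar>c * x w - k w\<bar> \<partial>Q)" using cpos
        by (simp add: field_simps)
    qed
    ultimately show ?thesis using cpos by (simp add: field_simps)
  qed
  have pz: "p z > 0"
  proof (rule ccontr)
    assume "\<not> p z > 0"
    then have pz0: "p z = 0" using pnn[of z] by simp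
    have "\<exists>k\<in>K. (\<integral>w. \<bar>z w - k w\<bar> \<partial>Q) < inverse (real (Suc n))" for n
    proof -
      have "Inf ((\<lambda>k. \<integral>w. \<bar>z w - k w\<bar> \<partial>Q) ` K) < inverse (real (Suc n))"
        using pz0 unfolding p_def by simp
      then show ?thesis using cInf_less_iff[OF _ bdd] Kne by blast
    qed
    then obtain f where f: "\<And>n. f n \<in> K" "\<And>n. (\<integral>w. \<bar>z w - f n w\<bar> \<partial>Q) < inverse (real (Suc n))"
      by metis
    have "(\<lambda>n. \<integral>w. \<bar>f n w - z w\<bar> \<partial>Q) \<longlonglongrightarrow> 0"
    proof (rule tendsto_sandwich[OF _ _ tendsto_const LIMSEQ_inverse_real_of_nat])
      show "\<forall>\<^sub>F n in sequentially. 0 \<le> (\<integral>w. \<bar>f n w - z w\<bar> \<partial>Q)" by auto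
      show "\<forall>\<^sub>F n in sequentially. (\<integral>w. \<bar>f n w - z w\<bar> \<partial>Q) \<le> inverse (real (Suc n))"
        using f(2) by (auto simp: abs_minus_commute less_imp_le)
    qed
    then have "z \<in> K" using cl f(1) zI KI' unfolding L1_closed_def by blast
    then show False using zK by simp
  qed
  interpret hb_setup "{x::'a\<Rightarrow>real. integrable Q x}" p z
  proof
    show "\<And>x y. x \<in> {x::'a\<Rightarrow>real. integrable Q x} \<Longrightarrow> y \<in> {x::'a\<Rightarrow>real. integrable Q x} \<Longrightarrow> (\<lambda>v. x v + y v) \<in> {x::'a\<Rightarrow>real. integrable Q x}"
      by auto
    fix x :: "'a \<Rightarrow> real" and c :: real assume "x \<in> {x::'a\<Rightarrow>real. integrable Q x}"
    then show "(\<lambda>v. c * x v) \<in> {x::'a\<Rightarrow>real. integrable Q x}" using integrable_mult_right[of c Q x] by simp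
  next
    show "z \<in> {x::'a\<Rightarrow>real. integrable Q x}" using zI by simp
    show "\<And>x y. x \<in> {x::'a\<Rightarrow>real. integrable Q x} \<Longrightarrow> y \<in> {x::'a\<Rightarrow>real. integrable Q x} \<Longrightarrow> p (\<lambda>v. x v + y v) \<le> p x + p y"
      using p_add by auto
    show "\<And>x c. x \<in> {x::'a\<Rightarrow>real. integrable Q x} \<Longrightarrow> 0 \<le> c \<Longrightarrow> p (\<lambda>v. c * x v) = c * p x"
      using p_scale by auto
  qed
  from hahn_banach obtain \<phi> where H: "(\<forall>x\<in>{x::'a\<Rightarrow>real. integrable Q x}. \<forall>y\<in>{x::'a\<Rightarrow>real. integrable Q x}. \<phi> (\<lambda>v. x v + y v) = \<phi> x + \<phi> y) \<and>
       (\<forall>x\<in>{x::'a\<Rightarrow>real. integrable Q x}. \<forall>c. \<phi> (\<lambda>v. c * x v) = c * \<phi> x) \<and>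
       (\<forall>x\<in>{x::'a\<Rightarrow>real. integrable Q x}. \<phi> x \<le> p x) \<and> \<phi> z = p z" by blast
  have phi_add: "\<And>x y :: 'a \<Rightarrow> real. integrable Q x \<Longrightarrow> integrable Q y \<Longrightarrow> \<phi> (\<lambda>v. x v + y v) = \<phi> x + \<phi> y"
    using H by blast
  have phi_sc: "\<And>(x :: 'a \<Rightarrow> real) c. integrable Q x \<Longrightarrow> \<phi> (\<lambda>v. c * x v) = c * \<phi> x" using H by blast
  have phi_p: "\<And>x :: 'a \<Rightarrow> real. integrable Q x \<Longrightarrow> \<phi> x \<le> p x" using H by blast
  have phi_z: "\<phi> z = p z" using H by blast
  show ?thesis
  proof (intro exI[of _ \<phi>] conjI allI impI ballI)
    fix x :: "'a \<Rightarrow> real" assume xI: "integrable Q x"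
    have "\<phi> x \<le> (\<integral>w. \<bar>x w\<bar> \<partial>Q)" using phi_p[OF xI] pabs[of x] by simp
    moreover have "- \<phi> x \<le> (\<integral>w. \<bar>x w\<bar> \<partial>Q)"
      using phi_p[of "\<lambda>v. (-1) * x v"] phi_sc[OF xI, of "-1"] pabs[of "\<lambda>v. (-1) * x v"] xI by simp
    ultimately show "\<bar>\<phi> x\<bar> \<le> (\<integral>w. \<bar>x w\<bar> \<partial>Q)" by simp
  next
    fix k assume k: "k \<in> K"
    show "\<phi> k \<le> 0" using phi_p[OF KI'[OF k]] plow[OF k, of k] by simp
  next
    show "\<phi> z > 0" using phi_z pz by simp
  qed (use phi_add phi_sc in auto)
qed


lemma represent:
  fixes Q :: "'a measure" and \<phi> :: "('a \<Rightarrow> real) \<Rightarrow> real"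
  assumes Q: "prob_space Q"
    and phadd: "\<And>x y. integrable Q x \<Longrightarrow> integrable Q y \<Longrightarrow> \<phi> (\<lambda>v. x v + y v) = \<phi> x + \<phi> y"
    and sc: "\<And>x c. integrable Q x \<Longrightarrow> \<phi> (\<lambda>v. c * x v) = c * \<phi> x"
    and bd: "\<And>x. integrable Q x \<Longrightarrow> \<bar>\<phi> x\<bar> \<le> (\<integral>w. \<bar>x w\<bar> \<partial>Q)"
  shows "\<exists>g \<in> borel_measurable Q. (\<forall>w. \<bar>g w\<bar> \<le> 1) \<and> (\<forall>x. integrable Q x \<longrightarrow> \<phi> x = (\<integral>w. g w * x w \<partial>Q))"
proof -
  interpret prob_space Q by (rule Q)
  have indI: "integrable Q (indicator A :: 'a \<Rightarrow> real)" if "A \<in> sets Q" for A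
    by (rule integrable_real_indicator[OF that]) (simp add: less_top[symmetric])
  have ind_abs: "(\<integral>w. \<bar>indicator A w :: real\<bar> \<partial>Q) = measure Q A" if "A \<in> sets Q" for A
  proof -
    have "(\<lambda>w. \<bar>indicator A w :: real\<bar>) = indicator A" by (auto simp: indicator_def)
    then show ?thesis using that by (simp add: Int_absorb2 sets.sets_into_space)
  qed
  have phi0: "\<phi> (\<lambda>v. 0) = 0" using sc[of "\<lambda>v. 0" 0] by simp
  define \<nu> where "\<nu> A = \<phi> (indicator A) + measure Q A" for A
  have phi_ind: "\<bar>\<phi> (indicator A)\<bar> \<le> measure Q A" if "A \<in> sets Q" for A
    using bd[OF indI[OF that]] ind_abs[OF that] by simp
  have nu_nn: "0 \<le> \<nu> A" if "A \<in> sets Q" for A using phi_ind[OF that] unfolding \<nu>_def by linarith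
  have nu_le: "\<nu> A \<le> 2 * measure Q A" if "A \<in> sets Q" for A using phi_ind[OF that] unfolding \<nu>_def by linarith
  have nu_add: "\<nu> (A \<union> B) = \<nu> A + \<nu> B" if "A \<in> sets Q" "B \<in> sets Q" "A \<inter> B = {}" for A B
  proof -
    have "indicator (A \<union> B) = (\<lambda>v. indicator A v + indicator B v :: real)"
      using that(3) by (auto simp: indicator_def fun_eq_iff)
    then have "\<phi> (indicator (A \<union> B)) = \<phi> (indicator A) + \<phi> (indicator B)"
      using phadd[OF indI[OF that(1)] indI[OF that(2)]] by simp
    moreover have "measure Q (A \<union> B) = measure Q A + measure Q B"
      using finite_measure_Union[OF that] .
    ultimately show ?thesis unfolding \<nu>_def by simp
  qed
  define \<mu> where "\<mu> A = ennreal (\<nu> A)" for A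
  have pos: "positive (sets Q) \<mu>"
  proof -
    have "indicator {} = (\<lambda>v::'a. 0::real)" by (auto simp: fun_eq_iff)
    then show ?thesis unfolding positive_def \<mu>_def \<nu>_def using phi0 by simp
  qed
  have addv: "additive (sets Q) \<mu>"
    unfolding additive_def \<mu>_def using nu_add nu_nn by (simp add: ennreal_plus)
  have ca: "countably_additive (sets Q) \<mu>"
    unfolding sets.countably_additive_iff_continuous_from_below[OF pos addv]
  proof (intro allI impI)
    fix A :: "nat \<Rightarrow> 'a set" assume A: "range A \<subseteq> sets Q" "incseq A" "(\<Union>i. A i) \<in> sets Q"
    define U where "U = (\<Union>i. A i)"
    have Ai: "A i \<in> sets Q" for i using A(1) by auto
    have AU: "A i \<subseteq> U" for i unfolding U_def by auto
    have split: "\<nu> U = \<nu> (A i) + \<nu> (U - A i)" for i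
    proof -
      have "U = A i \<union> (U - A i)" using AU[of i] by auto
      then have "\<nu> U = \<nu> (A i \<union> (U - A i))" by simp
      also have "\<dots> = \<nu> (A i) + \<nu> (U - A i)"
        by (rule nu_add) (use Ai A(3) U_def in auto)
      finally show ?thesis .
    qed
    have mlim: "(\<lambda>i. measure Q (A i)) \<longlonglongrightarrow> measure Q U"
      unfolding U_def by (rule finite_Lim_measure_incseq[OF A(1,2)])
    have "(\<lambda>i. \<nu> (A i)) \<longlonglongrightarrow> \<nu> U"
    proof (rule tendsto_sandwich[where f="\<lambda>i. \<nu> U - 2 * (measure Q U - measure Q (A i))" and h="\<lambda>i. \<nu> U"])
      show "\<forall>\<^sub>F i in sequentially. \<nu> U - 2 * (measure Q U - measure Q (A i)) \<le> \<nu> (A i)"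
      proof (intro always_eventually allI)
        fix i
        have "\<nu> (U - A i) \<le> 2 * measure Q (U - A i)" by (rule nu_le) (use Ai A(3) U_def in auto)
        also have "measure Q (U - A i) = measure Q U - measure Q (A i)"
          by (rule finite_measure_Diff) (use Ai A(3) U_def AU in auto)
        finally show "\<nu> U - 2 * (measure Q U - measure Q (A i)) \<le> \<nu> (A i)" using split[of i] by simp
      qed
      show "\<forall>\<^sub>F i in sequentially. \<nu> (A i) \<le> \<nu> U"
      proof (intro always_eventually allI)
        fix i
        have "0 \<le> \<nu> (U - A i)" by (rule nu_nn) (use Ai A(3) U_def in auto)
        then show "\<nu> (A i) \<le> \<nu> U" using split[of i] by simp
      qed
      show "(\<lambda>i. \<nu> U) \<longlonglongrightarrow> \<nu> U" by simp
      have "(\<lambda>i. \<nu> U - 2 * (measure Q U - measure Q (A i))) \<longlonglongrightarrow> \<nu> U - 2 * (measure Q U - measure Q U)"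
        by (intro tendsto_intros mlim)
      then show "(\<lambda>i. \<nu> U - 2 * (measure Q U - measure Q (A i))) \<longlonglongrightarrow> \<nu> U" by simp
    qed
    then show "(\<lambda>i. \<mu> (A i)) \<longlonglongrightarrow> \<mu> (\<Union>i. A i)"
      unfolding \<mu>_def U_def[symmetric] by (rule tendsto_ennrealI)
  qed
  define N where "N = measure_of (space Q) (sets Q) \<mu>"
  have sa: "sigma_algebra (space Q) (sets Q)" ..
  have emN: "emeasure N A = \<mu> A" if "A \<in> sets Q" for A
    unfolding N_def by (rule emeasure_measure_of_sigma[OF sa pos ca that])
  have setsN: "sets N = sets Q" unfolding N_def by simp
  have ac: "absolutely_continuous Q N"
    unfolding absolutely_continuous_def
  proof
    fix A assume "A \<in> null_sets Q"
    then have A: "A \<in> sets Q" "emeasure Q A = 0" by auto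
    then have "measure Q A = 0" by (simp add: measure_def)
    then have "\<nu> A = 0" using nu_nn[OF A(1)] nu_le[OF A(1)] by simp
    then have "emeasure N A = 0" using emN[OF A(1)] by (simp add: \<mu>_def)
    then show "A \<in> null_sets N" using A(1) setsN by (intro null_setsI) auto
  qed
  obtain f where fM[measurable]: "f \<in> borel_measurable Q" and dens: "density Q f = N"
    using Radon_Nikodym[OF ac setsN] by blast
  have fint: "(\<integral>\<^sup>+w. f w * indicator A w \<partial>Q) = ennreal (\<nu> A)" if "A \<in> sets Q" for A
    using emeasure_density[OF fM that] dens emN[OF that] unfolding \<mu>_def by simp
  define B where "B n = {w \<in> space Q. ennreal (2 + inverse (real (Suc n))) \<le> f w}" for n
  have BS[measurable]: "B n \<in> sets Q" for n unfolding B_def by measurable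
  have Bnull: "B n \<in> null_sets Q" for n
  proof -
    define c where "c = 2 + inverse (real (Suc n))"
    have cpos: "c > 2" unfolding c_def by simp
    define m where "m = measure Q (B n)"
    have m0: "m \<ge> 0" unfolding m_def by simp
    have "ennreal c * emeasure Q (B n) = (\<integral>\<^sup>+w. ennreal c * indicator (B n) w \<partial>Q)"
      by (simp add: nn_integral_cmult_indicator)
    also have "\<dots> \<le> (\<integral>\<^sup>+w. f w * indicator (B n) w \<partial>Q)"
      by (rule nn_integral_mono) (auto simp: B_def c_def indicator_def)
    also have "\<dots> = ennreal (\<nu> (B n))" by (rule fint[OF BS])
    also have "\<dots> \<le> ennreal (2 * m)" unfolding m_def by (rule ennreal_leI[OF nu_le[OF BS]])
    finally have "ennreal c * ennreal m \<le> ennreal (2 * m)" unfolding m_def by (simp add: emeasure_eq_measure)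
    then have "ennreal (c * m) \<le> ennreal (2 * m)" using cpos m0 by (simp add: ennreal_mult)
    then have "c * m \<le> 2 * m" using m0 by (simp add: ennreal_le_iff)
    then have "m = 0" using cpos m0 by (metis mult_right_le_imp_le linorder_not_le order.antisym mult_le_cancel_right) 
    then show ?thesis unfolding m_def using BS by (intro null_setsI) (auto simp: emeasure_eq_measure)
  qed
  have fle: "AE w in Q. f w \<le> 2"
  proof (rule AE_I')
    show "(\<Union>n. B n) \<in> null_sets Q" using Bnull by (rule null_sets_UN)
    show "{w \<in> space Q. \<not> f w \<le> 2} \<subseteq> (\<Union>n. B n)"
    proof
      fix w assume w: "w \<in> {w \<in> space Q. \<not> f w \<le> 2}"
      then have gt: "f w > 2" by (simp add: not_le)
      have "\<exists>n. ennreal (2 + inverse (real (Suc n))) \<le> f w"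
      proof (cases "f w = \<infinity>")
        case True then show ?thesis by simp
      next
        case False
        then obtain r where r: "f w = ennreal r" "0 \<le> r" by (cases "f w") auto
        then have "r > 2" using gt by (metis ennreal_less_iff ennreal_numeral zero_le_numeral)
        then obtain n where "inverse (real (Suc n)) < r - 2"
          using reals_Archimedean[of "r - 2"] by auto
        then have "2 + inverse (real (Suc n)) \<le> r" by simp
        then have "ennreal (2 + inverse (real (Suc n))) \<le> ennreal r" by (rule ennreal_leI)
        then have "ennreal (2 + inverse (real (Suc n))) \<le> f w" using r(1) by simp
        then show ?thesis by blast
      qed
      then show "w \<in> (\<Union>n. B n)" using w unfolding B_def by auto
    qed
  qed
  define h where "h w = enn2real (min (f w) 2)" for w
  have hM[measurable]: "h \<in> borel_measurable Q" unfolding h_def by measurable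
  have h01: "0 \<le> h w \<and> h w \<le> 2" for w
  proof -
    have "min (f w) 2 \<le> 2" by simp
    then have "enn2real (min (f w) 2) \<le> enn2real 2" by (intro enn2real_mono) auto
    then show ?thesis unfolding h_def by simp
  qed
  have hI: "integrable Q h"
    by (rule integrable_const_bound[where B=2]) (use h01 in auto)
  have fh: "AE w in Q. f w = ennreal (h w)"
    using fle
  proof eventually_elim
    fix w assume w2: "f w \<le> 2"
    then have "f w < top" using le_less_trans[of "f w" 2 top] by simp
    then show "f w = ennreal (h w)" using w2 by (simp add: h_def min_def ennreal_enn2real)
  qed
  define g where "g w = h w - 1" for w
  have gM: "g \<in> borel_measurable Q" unfolding g_def by measurable
  have gb: "\<bar>g w\<bar> \<le> 1" for w using h01[of w] unfolding g_def by auto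
  have phi_ind2: "\<phi> (indicator A) = (\<integral>w. g w * indicator A w \<partial>Q)" if A: "A \<in> sets Q" for A
  proof -
    have hAI: "integrable Q (\<lambda>w. h w * indicator A w)"
      by (rule integrable_real_mult_indicator[OF A hI])
    have "ennreal (\<nu> A) = (\<integral>\<^sup>+w. f w * indicator A w \<partial>Q)" using fint[OF A] by simp
    also have "\<dots> = (\<integral>\<^sup>+w. ennreal (h w * indicator A w) \<partial>Q)"
      by (rule nn_integral_cong_AE) (use fh in \<open>eventually_elim, auto simp: indicator_def\<close>)
    also have "\<dots> = ennreal (\<integral>w. h w * indicator A w \<partial>Q)"
      by (rule nn_integral_eq_integral[OF hAI]) (use h01 in auto)
    finally have "\<nu> A = (\<integral>w. h w * indicator A w \<partial>Q)"
      using nu_nn[OF A] by (subst (asm) ennreal_inj) (auto intro!: integral_nonneg_AE simp: h01)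
    also have "(\<lambda>w. h w * indicator A w) = (\<lambda>w. g w * indicator A w + indicator A w)"
      by (auto simp: g_def fun_eq_iff indicator_def)
    also have "(\<integral>w. g w * indicator A w + indicator A w \<partial>Q) = (\<integral>w. g w * indicator A w \<partial>Q) + measure Q A"
    proof -
      have gAI: "integrable Q (\<lambda>w. g w * indicator A w)"
        using hAI indI[OF A] unfolding g_def by (simp add: left_diff_distrib)
      show ?thesis using Bochner_Integration.integral_add[OF gAI indI[OF A]] A
        by (simp add: Int_absorb2 sets.sets_into_space)
    qed
    finally show ?thesis unfolding \<nu>_def by simp
  qed
  have gI: "integrable Q (\<lambda>w. g w * x w)" if "integrable Q x" for x
  proof (rule Bochner_Integration.integrable_bound[OF that])
    have xM: "x \<in> borel_measurable Q" using that by (rule borel_measurable_integrable)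
    show "(\<lambda>w. g w * x w) \<in> borel_measurable Q" using gM xM by (rule borel_measurable_times)
    show "AE w in Q. norm (g w * x w) \<le> norm (x w)"
    proof (rule AE_I2)
      fix w have "\<bar>g w\<bar> * \<bar>x w\<bar> \<le> 1 * \<bar>x w\<bar>" by (rule mult_right_mono[OF gb]) simp
      then show "norm (g w * x w) \<le> norm (x w)" by (simp add: abs_mult)
    qed
  qed
  have main: "\<phi> x = (\<integral>w. g w * x w \<partial>Q)" if "integrable Q x" for x
    using that
  proof (induct rule: integrable_induct)
    case (base A c)
    have "(\<lambda>x. indicator A x *\<^sub>R c) = (\<lambda>v. c * indicator A v)" by (auto simp: fun_eq_iff)
    moreover have "(\<integral>w. g w * (indicator A w * c) \<partial>Q) = c * (\<integral>w. g w * indicator A w \<partial>Q)"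
    proof -
      have "(\<lambda>w. g w * (indicator A w * c)) = (\<lambda>w. c * (g w * indicator A w))" by (auto simp: fun_eq_iff)
      then show ?thesis by (simp only: integral_mult_right_zero)
    qed
    ultimately show ?case using sc[OF indI[OF base(1)], of c] phi_ind2[OF base(1)] by simp
  next
    case (add f1 f2)
    have "(\<integral>w. g w * (f1 w + f2 w) \<partial>Q) = (\<integral>w. g w * f1 w \<partial>Q) + (\<integral>w. g w * f2 w \<partial>Q)"
      using Bochner_Integration.integral_add[OF gI[OF add(1)] gI[OF add(3)]] by (simp add: distrib_left)
    then show ?case using add phadd[OF add(1) add(3)] by simp
  next
    case (lim F s)
    define \<psi> where "\<psi> x = \<phi> x - (\<integral>w. g w * x w \<partial>Q)" for x
    have psi_s: "\<psi> (s i) = 0" for i using lim(2) unfolding \<psi>_def by simp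
    have dI: "integrable Q (\<lambda>v. F v - s i v)" for i using lim(1,5) by auto
    have bound: "\<bar>\<psi> F\<bar> \<le> 2 * (\<integral>w. \<bar>F w - s i w\<bar> \<partial>Q)" for i
    proof -
      have e1: "(\<lambda>v. s i v + (F v - s i v)) = F" by auto
      have "\<phi> F = \<phi> (s i) + \<phi> (\<lambda>v. F v - s i v)" using phadd[OF lim(1)[of i] dI[of i]] e1 by simp
      moreover have "(\<integral>w. g w * F w \<partial>Q) = (\<integral>w. g w * s i w \<partial>Q) + (\<integral>w. g w * (F w - s i w) \<partial>Q)"
      proof -
        have "(\<lambda>w. g w * F w) = (\<lambda>w. g w * s i w + g w * (F w - s i w))" by (auto simp: algebra_simps fun_eq_iff)
        then show ?thesis using Bochner_Integration.integral_add[OF gI[OF lim(1)[of i]] gI[OF dI[of i]]] by simp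
      qed
      ultimately have "\<psi> F = \<phi> (\<lambda>v. F v - s i v) - (\<integral>w. g w * (F w - s i w) \<partial>Q)"
        using psi_s[of i] unfolding \<psi>_def by simp
      moreover have "\<bar>\<integral>w. g w * (F w - s i w) \<partial>Q\<bar> \<le> (\<integral>w. \<bar>F w - s i w\<bar> \<partial>Q)"
      proof -
        have "\<bar>\<integral>w. g w * (F w - s i w) \<partial>Q\<bar> \<le> (\<integral>w. \<bar>g w * (F w - s i w)\<bar> \<partial>Q)"
          by (rule integral_abs_bound)
        also have "\<dots> \<le> (\<integral>w. \<bar>F w - s i w\<bar> \<partial>Q)"
        proof (rule integral_mono)
          show "integrable Q (\<lambda>w. \<bar>g w * (F w - s i w)\<bar>)" by (rule integrable_abs[OF gI[OF dI[of i]]])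
          show "integrable Q (\<lambda>w. \<bar>F w - s i w\<bar>)" by (rule integrable_abs[OF dI[of i]])
          fix w
          have "\<bar>g w\<bar> * \<bar>F w - s i w\<bar> \<le> 1 * \<bar>F w - s i w\<bar>" by (rule mult_right_mono[OF gb]) simp
          then show "\<bar>g w * (F w - s i w)\<bar> \<le> \<bar>F w - s i w\<bar>" by (simp add: abs_mult)
        qed
        finally show ?thesis .
      qed
      moreover have "\<bar>\<phi> (\<lambda>v. F v - s i v)\<bar> \<le> (\<integral>w. \<bar>F w - s i w\<bar> \<partial>Q)" using bd[OF dI] .
      ultimately show ?thesis by linarith
    qed
    have "(\<lambda>i. \<integral>w. \<bar>F w - s i w\<bar> \<partial>Q) \<longlonglongrightarrow> (\<integral>w. 0 \<partial>Q)"
    proof (rule integral_dominated_convergence[where w="\<lambda>w. 3 * \<bar>F w\<bar>"])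
      show "(\<lambda>w. 0::real) \<in> borel_measurable Q" by simp
      show "\<And>i. (\<lambda>w. \<bar>F w - s i w\<bar>) \<in> borel_measurable Q" using dI by (auto intro: borel_measurable_integrable)
      show "integrable Q (\<lambda>w. 3 * \<bar>F w\<bar>)" using lim(5) by auto
      show "AE x in Q. (\<lambda>i. \<bar>F x - s i x\<bar>) \<longlonglongrightarrow> 0"
      proof (rule AE_I2)
        fix x assume "x \<in> space Q"
        then have "(\<lambda>i. F x - s i x) \<longlonglongrightarrow> F x - F x" by (intro tendsto_intros lim(3))
        then have "(\<lambda>i. \<bar>F x - s i x\<bar>) \<longlonglongrightarrow> \<bar>F x - F x\<bar>" by (rule tendsto_rabs)
        then show "(\<lambda>i. \<bar>F x - s i x\<bar>) \<longlonglongrightarrow> 0" by simp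
      qed
      show "\<And>i. AE x in Q. norm \<bar>F x - s i x\<bar> \<le> 3 * \<bar>F x\<bar>"
      proof (rule AE_I2)
        fix i x assume "x \<in> space Q"
        then have "\<bar>s i x\<bar> \<le> 2 * \<bar>F x\<bar>" using lim(4) by simp
        then show "norm \<bar>F x - s i x\<bar> \<le> 3 * \<bar>F x\<bar>" by simp
      qed
    qed
    then have lim0: "(\<lambda>i. 2 * (\<integral>w. \<bar>F w - s i w\<bar> \<partial>Q)) \<longlonglongrightarrow> 0"
      using tendsto_mult[OF tendsto_const, of _ 0 sequentially 2] by simp
    have "\<bar>\<psi> F\<bar> \<le> 0"
      by (rule LIMSEQ_le_const[OF lim0]) (use bound in blast)
    then show ?case unfolding \<psi>_def by simp
  qed
  show ?thesis using gM gb main by blast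
qed


lemma perturb:
  assumes FM[measurable]: "F \<in> borel_measurable M" and nF: "eneg M F < \<infinity>" "eneg M F \<le> epos M F"
    and GI: "integrable M G" and G0: "0 \<le> integral\<^sup>L M G"
  shows "eneg M (\<lambda>w. F w + ereal (G w)) < \<infinity> \<and> eneg M (\<lambda>w. F w + ereal (G w)) \<le> epos M (\<lambda>w. F w + ereal (G w))"
proof -
  have GM[measurable]: "G \<in> borel_measurable M" using GI by (rule borel_measurable_integrable)
  define Gp where "Gp = (\<integral>\<^sup>+w. ennreal (G w) \<partial>M)"
  define Gn where "Gn = (\<integral>\<^sup>+w. ennreal (- G w) \<partial>M)"
  have nrm: "(\<integral>\<^sup>+w. ennreal (norm (G w)) \<partial>M) < \<infinity>" using GI by (simp add: integrable_iff_bounded)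
  have Gpf: "Gp < \<infinity>"
  proof -
    have "Gp \<le> (\<integral>\<^sup>+w. ennreal (norm (G w)) \<partial>M)" unfolding Gp_def
      by (rule nn_integral_mono) (auto intro: ennreal_leI)
    then show ?thesis using nrm by (simp add: le_less_trans)
  qed
  have Gnf: "Gn < \<infinity>"
  proof -
    have "Gn \<le> (\<integral>\<^sup>+w. ennreal (norm (G w)) \<partial>M)" unfolding Gn_def
      by (rule nn_integral_mono) (auto intro: ennreal_leI)
    then show ?thesis using nrm by (simp add: le_less_trans)
  qed
  have GnGp: "Gn \<le> Gp"
  proof -
    have "0 \<le> enn2real Gp - enn2real Gn" using G0 real_lebesgue_integral_def[OF GI] unfolding Gp_def Gn_def by simp
    then have "enn2real Gn \<le> enn2real Gp" by simp
    then have le: "ennreal (enn2real Gn) \<le> ennreal (enn2real Gp)" by (rule ennreal_leI)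
    have e1: "ennreal (enn2real Gn) = Gn" using Gnf by (intro ennreal_enn2real) simp
    have e2: "ennreal (enn2real Gp) = Gp" using Gpf by (intro ennreal_enn2real) simp
    show ?thesis using le unfolding e1 e2 .
  qed
  have ident: "epos M (\<lambda>w. F w + ereal (G w)) + eneg M F + Gn = eneg M (\<lambda>w. F w + ereal (G w)) + epos M F + Gp"
  proof -
    have "epos M (\<lambda>w. F w + ereal (G w)) + eneg M F + Gn =
        (\<integral>\<^sup>+w. e2ennreal (F w + ereal (G w)) + e2ennreal (- F w) + ennreal (- G w) \<partial>M)"
      unfolding epos_def eneg_def Gn_def by (simp add: nn_integral_add)
    also have "\<dots> = (\<integral>\<^sup>+w. e2ennreal (- (F w + ereal (G w))) + e2ennreal (F w) + ennreal (G w) \<partial>M)"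
      by (rule nn_integral_cong) (rule e2_ident)
    also have "\<dots> = eneg M (\<lambda>w. F w + ereal (G w)) + epos M F + Gp"
      unfolding epos_def eneg_def Gp_def by (simp add: nn_integral_add)
    finally show ?thesis .
  qed
  have negb: "eneg M (\<lambda>w. F w + ereal (G w)) \<le> eneg M F + Gn"
  proof -
    have "eneg M (\<lambda>w. F w + ereal (G w)) \<le> (\<integral>\<^sup>+w. e2ennreal (- F w) + ennreal (- G w) \<partial>M)"
      unfolding eneg_def by (rule nn_integral_mono) (rule e2_neg_sub)
    also have "\<dots> = eneg M F + Gn" unfolding eneg_def Gn_def by (simp add: nn_integral_add)
    finally show ?thesis .
  qed
  have fin: "eneg M F + Gn < \<infinity>" using nF(1) Gnf by simp
  have "eneg M (\<lambda>w. F w + ereal (G w)) + (eneg M F + Gn) \<le> eneg M (\<lambda>w. F w + ereal (G w)) + epos M F + Gp"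
    using nF(2) GnGp by (simp add: add.assoc add_mono)
  also have "\<dots> = epos M (\<lambda>w. F w + ereal (G w)) + (eneg M F + Gn)" using ident by (simp add: add.assoc)
  finally have "eneg M (\<lambda>w. F w + ereal (G w)) \<le> epos M (\<lambda>w. F w + ereal (G w))"
    by (rule ennreal_cancel[rotated]) (use fin in \<open>simp add: less_top\<close>)
  then show ?thesis using negb fin by (simp add: le_less_trans)
qed

lemma case_zero:
  assumes y0M[measurable]: "y0 \<in> borel_measurable Q" and I0: "(\<integral>\<^sup>+w. e2ennreal (eexp (y0 w)) \<partial>Q) = 0"
  shows "eint_defined Q (\<lambda>w. y0 w * eexp (y0 w)) \<and> eint Q (\<lambda>w. y0 w * eexp (y0 w)) = 0 \<and>
         (\<forall>y\<in>dual_cone Q K. eint_defined Q (\<lambda>w. y w * eexp (y0 w)) \<and>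
           eint Q (\<lambda>w. y w * eexp (y0 w)) \<ge> 0)"
proof -
  have "AE w in Q. e2ennreal (eexp (y0 w)) = 0" using I0 by (subst (asm) nn_integral_0_iff_AE) auto
  then have ae: "AE w in Q. eexp (y0 w) = 0"
  proof eventually_elim
    fix w assume "e2ennreal (eexp (y0 w)) = 0"
    then have "enn2ereal (e2ennreal (eexp (y0 w))) = 0" by (simp add: zero_ennreal.rep_eq)
    moreover have "enn2ereal (e2ennreal (eexp (y0 w))) = eexp (y0 w)" by (rule enn2ereal_e2ennreal[OF eexp_nonneg])
    ultimately show "eexp (y0 w) = 0" by (simp add: zero_ennreal.rep_eq)
  qed
  have gen: "eint_defined Q (\<lambda>w. y w * eexp (y0 w)) \<and> eint Q (\<lambda>w. y w * eexp (y0 w)) = 0"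
    if yM[measurable]: "y \<in> borel_measurable Q" for y
  proof (rule eint_AE_zero)
    show "(\<lambda>w. y w * eexp (y0 w)) \<in> borel_measurable Q" by measurable
    show "AE w in Q. y w * eexp (y0 w) = 0" using ae by eventually_elim simp
  qed
  show ?thesis using gen[OF y0M] gen unfolding dual_cone_def by auto
qed

lemma scale_mem:
  assumes KI: "K \<subseteq> {x. integrable Q x}" and y: "y \<in> dual_cone Q K" and t: "0 \<le> t"
  shows "(\<lambda>w. ereal t * y w) \<in> dual_cone Q K"
proof -
  have yM[measurable]: "y \<in> borel_measurable Q" using y unfolding dual_cone_def by auto
  have meas: "(\<lambda>w. ereal t * y w) \<in> borel_measurable Q" by measurable
  have main: "eint_defined Q (\<lambda>w. ereal (x w) * (ereal t * y w)) \<and> 0 \<le> eint Q (\<lambda>w. ereal (x w) * (ereal t * y w))" if x: "x \<in> K" for x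
  proof -
    have xM[measurable]: "x \<in> borel_measurable Q" using KI x by (auto intro: borel_measurable_integrable)
    define F where "F w = ereal (x w) * y w" for w
    have FM[measurable]: "F \<in> borel_measurable Q" unfolding F_def by measurable
    have "eint_defined Q F \<and> 0 \<le> eint Q F" using y x unfolding dual_cone_def F_def by auto
    then have nF: "eneg Q F < \<infinity>" "eneg Q F \<le> epos Q F" using eint_nonneg_iff[OF FM] by auto
    have eq: "(\<lambda>w. ereal (x w) * (ereal t * y w)) = (\<lambda>w. ereal t * F w)" unfolding F_def by (simp add: pw_scale)
    have p: "epos Q (\<lambda>w. ereal t * F w) = ennreal t * epos Q F"
      unfolding epos_def using t by (simp add: e2_scale nn_integral_cmult)
    have n: "eneg Q (\<lambda>w. ereal t * F w) = ennreal t * eneg Q F"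
    proof -
      have "(\<lambda>w. e2ennreal (- (ereal t * F w))) = (\<lambda>w. ennreal t * e2ennreal (- F w))"
        using t by (auto simp: e2_scale[symmetric])
      then show ?thesis unfolding eneg_def by (simp add: nn_integral_cmult)
    qed
    have "eneg Q (\<lambda>w. ereal t * F w) < \<infinity> \<and> eneg Q (\<lambda>w. ereal t * F w) \<le> epos Q (\<lambda>w. ereal t * F w)"
      unfolding p n using nF by (auto intro: mult_left_mono simp: ennreal_mult_less_top)
    then have "eint_defined Q (\<lambda>w. ereal t * F w) \<and> 0 \<le> eint Q (\<lambda>w. ereal t * F w)"
      by (subst eint_nonneg_iff) auto
    then show "eint_defined Q (\<lambda>w. ereal (x w) * (ereal t * y w)) \<and> 0 \<le> eint Q (\<lambda>w. ereal (x w) * (ereal t * y w))"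
      unfolding eq .
  qed
  show ?thesis unfolding dual_cone_def using meas main by blast
qed

lemma pert_mem:
  assumes KI: "K \<subseteq> {x. integrable Q x}" and y: "y \<in> dual_cone Q K"
    and hM[measurable]: "h \<in> borel_measurable Q" and hb: "\<And>w. \<bar>h w\<bar> \<le> B"
    and hK: "\<And>x. x \<in> K \<Longrightarrow> 0 \<le> (\<integral>w. x w * h w \<partial>Q)"
  shows "(\<lambda>w. y w + ereal (h w)) \<in> dual_cone Q K"
proof -
  have yM[measurable]: "y \<in> borel_measurable Q" using y unfolding dual_cone_def by auto
  have meas: "(\<lambda>w. y w + ereal (h w)) \<in> borel_measurable Q" by measurable
  have main: "eint_defined Q (\<lambda>w. ereal (x w) * (y w + ereal (h w))) \<and> 0 \<le> eint Q (\<lambda>w. ereal (x w) * (y w + ereal (h w)))" if x: "x \<in> K" for x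
  proof -
    have xI: "integrable Q x" using KI x by auto
    have xM[measurable]: "x \<in> borel_measurable Q" using xI by (rule borel_measurable_integrable)
    define F where "F w = ereal (x w) * y w" for w
    have FM[measurable]: "F \<in> borel_measurable Q" unfolding F_def by measurable
    have "eint_defined Q F \<and> 0 \<le> eint Q F" using y x unfolding dual_cone_def F_def by auto
    then have nF: "eneg Q F < \<infinity>" "eneg Q F \<le> epos Q F" using eint_nonneg_iff[OF FM] by auto
    have GI: "integrable Q (\<lambda>w. x w * h w)"
    proof (rule Bochner_Integration.integrable_bound[where f="\<lambda>w. B * x w"])
      show "integrable Q (\<lambda>w. B * x w)" using xI by simp
      show "(\<lambda>w. x w * h w) \<in> borel_measurable Q" by measurable
      show "AE w in Q. norm (x w * h w) \<le> norm (B * x w)"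
      proof (rule AE_I2)
        fix w
        have "\<bar>x w\<bar> * \<bar>h w\<bar> \<le> \<bar>x w\<bar> * B" by (rule mult_left_mono[OF hb]) simp
        also have "\<dots> \<le> \<bar>B\<bar> * \<bar>x w\<bar>" by (simp add: mult.commute mult_right_mono)
        finally show "norm (x w * h w) \<le> norm (B * x w)" by (simp add: abs_mult)
      qed
    qed
    have eq: "(\<lambda>w. ereal (x w) * (y w + ereal (h w))) = (\<lambda>w. F w + ereal (x w * h w))"
      unfolding F_def by (simp add: pw_add)
    have "eneg Q (\<lambda>w. F w + ereal (x w * h w)) < \<infinity> \<and>
        eneg Q (\<lambda>w. F w + ereal (x w * h w)) \<le> epos Q (\<lambda>w. F w + ereal (x w * h w))"
      by (rule perturb[OF FM nF GI hK[OF x]])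
    then have "eint_defined Q (\<lambda>w. F w + ereal (x w * h w)) \<and> 0 \<le> eint Q (\<lambda>w. F w + ereal (x w * h w))"
      by (subst eint_nonneg_iff) auto
    then show "eint_defined Q (\<lambda>w. ereal (x w) * (y w + ereal (h w))) \<and> 0 \<le> eint Q (\<lambda>w. ereal (x w) * (y w + ereal (h w)))"
      unfolding eq .
  qed
  show ?thesis unfolding dual_cone_def using meas main by blast
qed


lemma scaling_deriv:
  fixes Q :: "'a measure" and y0 :: "'a \<Rightarrow> ereal"
  assumes Q: "prob_space Q" and y0M[measurable]: "y0 \<in> borel_measurable Q" and fin: "AE w in Q. y0 w \<noteq> \<infinity>"
    and I0fin: "(\<integral>\<^sup>+w. e2ennreal (eexp (y0 w)) \<partial>Q) < \<infinity>"
    and opt: "\<And>t. 0 < t \<Longrightarrow> t < 1 \<Longrightarrow> (\<integral>\<^sup>+w. e2ennreal (eexp (y0 w)) \<partial>Q) \<le> (\<integral>\<^sup>+w. e2ennreal (eexp (ereal t * y0 w)) \<partial>Q)"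
  shows "epos Q (\<lambda>w. y0 w * eexp (y0 w)) \<le> eneg Q (\<lambda>w. y0 w * eexp (y0 w))"
proof -
  interpret prob_space Q by (rule Q)
  define fi where "fi w = (y0 w \<noteq> -\<infinity> \<and> y0 w \<noteq> \<infinity>)" for w
  define u where "u w = real_of_ereal (y0 w)" for w
  define A where "A t w = (if fi w then exp (t * u w) else 0)" for t w
  define Pp where "Pp t w = (if fi w then max (u w * exp (t * u w)) 0 else 0)" for t w
  define Nn where "Nn t w = (if fi w then max (- (u w * exp (t * u w))) 0 else 0)" for t w
  have fiS: "{w \<in> space Q. fi w} \<in> sets Q"
  proof -
    have "{w \<in> space Q. fi w} = space Q - (y0 -` {-\<infinity>, \<infinity>} \<inter> space Q)" unfolding fi_def by auto
    also have "\<dots> \<in> sets Q" by (intro sets.Diff sets.top measurable_sets[OF y0M]) auto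
    finally show ?thesis .
  qed
  have fiP[measurable]: "Measurable.pred Q fi" using fiS by (simp add: pred_def)
  have uM[measurable]: "u \<in> borel_measurable Q" unfolding u_def by measurable
  have AM[measurable]: "(\<lambda>w. A t w) \<in> borel_measurable Q" for t unfolding A_def by measurable
  have PM[measurable]: "(\<lambda>w. Pp t w) \<in> borel_measurable Q" for t unfolding Pp_def by measurable
  have NM[measurable]: "(\<lambda>w. Nn t w) \<in> borel_measurable Q" for t unfolding Nn_def by measurable
  have Pnn: "0 \<le> Pp t w" for t w unfolding Pp_def by auto
  have Nnn: "0 \<le> Nn t w" for t w unfolding Nn_def by auto
  have Ann: "0 \<le> A t w" for t w unfolding A_def by auto
  have Aeq: "AE w in Q. e2ennreal (eexp (ereal t * y0 w)) = ennreal (A t w)" if t: "0 < t" for t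
    using fin
  proof eventually_elim
    fix w assume "y0 w \<noteq> \<infinity>"
    then show "e2ennreal (eexp (ereal t * y0 w)) = ennreal (A t w)"
      using t by (cases "y0 w") (auto simp: A_def fi_def u_def)
  qed
  have A1: "AE w in Q. e2ennreal (eexp (y0 w)) = ennreal (A 1 w)" using Aeq[of 1] by simp
  have Peq: "AE w in Q. e2ennreal (y0 w * eexp (y0 w)) = ennreal (Pp 1 w)"
    using fin
  proof eventually_elim
    fix w assume "y0 w \<noteq> \<infinity>"
    then show "e2ennreal (y0 w * eexp (y0 w)) = ennreal (Pp 1 w)"
      by (cases "y0 w") (auto simp: Pp_def fi_def u_def ennreal_max0[symmetric])
  qed
  have Neq: "AE w in Q. e2ennreal (- (y0 w * eexp (y0 w))) = ennreal (Nn 1 w)"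
    using fin
  proof eventually_elim
    fix w assume "y0 w \<noteq> \<infinity>"
    then show "e2ennreal (- (y0 w * eexp (y0 w))) = ennreal (Nn 1 w)"
      by (cases "y0 w") (auto simp: Nn_def fi_def u_def ennreal_max0[symmetric])
  qed
  define IA where "IA t = (\<integral>\<^sup>+w. ennreal (A t w) \<partial>Q)" for t
  define IP where "IP t = (\<integral>\<^sup>+w. ennreal (Pp t w) \<partial>Q)" for t
  define IN where "IN t = (\<integral>\<^sup>+w. ennreal (Nn t w) \<partial>Q)" for t
  have I0eq: "(\<integral>\<^sup>+w. e2ennreal (eexp (y0 w)) \<partial>Q) = IA 1"
    unfolding IA_def by (rule nn_integral_cong_AE[OF A1])
  have IAt: "IA 1 \<le> IA t" if "0 < t" "t < 1" for t
  proof -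
    have "IA 1 \<le> (\<integral>\<^sup>+w. e2ennreal (eexp (ereal t * y0 w)) \<partial>Q)" using opt[OF that] I0eq by simp
    also have "\<dots> = IA t" unfolding IA_def by (rule nn_integral_cong_AE[OF Aeq[OF that(1)]])
    finally show ?thesis .
  qed
  have IAfin: "IA t < \<infinity>" if "0 \<le> t" "t \<le> 1" for t
  proof -
    have "IA t \<le> (\<integral>\<^sup>+w. ennreal (1 + A 1 w) \<partial>Q)" unfolding IA_def
    proof (rule nn_integral_mono, rule ennreal_leI)
      fix w show "A t w \<le> 1 + A 1 w" unfolding A_def using exp_scale_bound[OF that, of "u w"] by auto
    qed
    also have "\<dots> = 1 + IA 1" unfolding IA_def
      by (simp add: ennreal_plus[OF zero_le_one Ann] nn_integral_add emeasure_space_1)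
    also have "\<dots> < \<infinity>" using I0fin I0eq by simp
    finally show ?thesis .
  qed
  have key: "IP t \<le> IN 1 + ennreal (8 * (1 - t))" if t: "1/2 \<le> t" "t < 1" for t
  proof -
    define c where "c = 1 - t"
    have c: "0 < c" "c < 1" using t unfolding c_def by auto
    have pw: "A t w + c * Pp t w \<le> A 1 w + c * Nn t w" for w
    proof (cases "fi w")
      case True
      define e where "e = exp (t * u w)"
      have tg: "e * (1 + c * u w) \<le> exp (u w)" unfolding e_def c_def by (rule exp_tangent)
      have split: "u w * e = max (u w * e) 0 - max (- (u w * e)) 0"
        by (cases "0 \<le> u w * e") (simp_all add: max_def)
      have tg': "e + c * (u w * e) \<le> exp (u w)" using tg by (simp add: algebra_simps)
      have cs: "c * (u w * e) = c * max (u w * e) 0 - c * max (- (u w * e)) 0"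
        using split by (metis right_diff_distrib)
      have "e + c * max (u w * e) 0 \<le> exp (u w) + c * max (- (u w * e)) 0"
        using tg' cs by linarith
      then show ?thesis using True unfolding A_def Pp_def Nn_def e_def by simp
    next
      case False then show ?thesis unfolding A_def Pp_def Nn_def by simp
    qed
    have "(\<integral>\<^sup>+w. ennreal (A t w + c * Pp t w) \<partial>Q) \<le> (\<integral>\<^sup>+w. ennreal (A 1 w + c * Nn t w) \<partial>Q)"
      by (rule nn_integral_mono, rule ennreal_leI, rule pw)
    moreover have "(\<integral>\<^sup>+w. ennreal (A t w + c * Pp t w) \<partial>Q) = IA t + ennreal c * IP t"
    proof -
      have "(\<lambda>w. ennreal (A t w + c * Pp t w)) = (\<lambda>w. ennreal (A t w) + ennreal c * ennreal (Pp t w))"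
        using c Ann Pnn by (auto simp: fun_eq_iff ennreal_plus ennreal_mult)
      then show ?thesis unfolding IA_def IP_def by (simp add: nn_integral_add nn_integral_cmult)
    qed
    moreover have "(\<integral>\<^sup>+w. ennreal (A 1 w + c * Nn t w) \<partial>Q) = IA 1 + ennreal c * IN t"
    proof -
      have "(\<lambda>w. ennreal (A 1 w + c * Nn t w)) = (\<lambda>w. ennreal (A 1 w) + ennreal c * ennreal (Nn t w))"
        using c Ann Nnn by (auto simp: fun_eq_iff ennreal_plus ennreal_mult)
      then show ?thesis unfolding IA_def IN_def by (simp add: nn_integral_add nn_integral_cmult)
    qed
    ultimately have "IA t + ennreal c * IP t \<le> IA 1 + ennreal c * IN t" by simp
    also have "\<dots> \<le> IA t + ennreal c * IN t" using IAt[of t] t by (auto intro: add_right_mono)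
    finally have "ennreal c * IP t + IA t \<le> ennreal c * IN t + IA t" by (simp add: add.commute)
    then have "ennreal c * IP t \<le> ennreal c * IN t"
      by (rule ennreal_cancel[rotated]) (use IAfin[of t] t in \<open>simp add: less_top\<close>)
    then have PN: "IP t \<le> IN t" using c by (subst (asm) ennreal_mult_le_mult_iff) auto
    have "IN t \<le> (\<integral>\<^sup>+w. ennreal (Nn 1 w + 8 * (1 - t)) \<partial>Q)" unfolding IN_def
    proof (rule nn_integral_mono, rule ennreal_leI)
      fix w show "Nn t w \<le> Nn 1 w + 8 * (1 - t)"
      proof (cases "fi w \<and> u w < 0")
        case True
        define v where "v = - u w"
        have v: "0 \<le> v" using True v_def by simp
        have nb: "v * exp (-(t * v)) \<le> v * exp (-v) + 8 * (1 - t)" using neg_part_bound[OF v t(1)] t by simp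
        have n1: "u w * exp (t * u w) < 0" "u w * exp (1 * u w) < 0" using True by (simp_all add: mult_neg_pos)
        have "Nn t w = v * exp (-(t * v))" "Nn 1 w = v * exp (-v)"
          using True n1 unfolding Nn_def v_def by (auto simp: max_def)
        then show ?thesis using nb by simp
      next
        case False
        then have "Nn t w = 0" unfolding Nn_def by (auto simp: max_def)
        then show ?thesis using Nnn[of 1 w] t by simp
      qed
    qed
    also have "\<dots> = IN 1 + ennreal (8 * (1 - t))" unfolding IN_def
      using t by (simp add: ennreal_plus[OF Nnn] nn_integral_add emeasure_space_1)
    finally show ?thesis using PN by simp
  qed
  define T where "T n = 1 - inverse (real (Suc (Suc n)))" for n
  have T: "1/2 \<le> T n" "T n < 1" "0 \<le> T n" for n
  proof -
    have "inverse (real (Suc (Suc n))) \<le> 1/2" by (simp add: field_simps)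
    then show "1/2 \<le> T n" "0 \<le> T n" unfolding T_def by auto
    show "T n < 1" unfolding T_def by simp
  qed
  have Tmono: "T m \<le> T n" if "m \<le> n" for m n
    unfolding T_def using that by (simp add: le_imp_inverse_le)
  have Pmono: "Pp s w \<le> Pp t w" if "s \<le> t" for s t w
  proof (cases "fi w \<and> 0 \<le> u w")
    case True
    then have "u w * exp (s * u w) \<le> u w * exp (t * u w)" using pos_part_mono[of "u w" s t] that by simp
    then show ?thesis unfolding Pp_def using True by simp
  next
    case False
    have "Pp s w = 0"
    proof (cases "fi w")
      case True
      then have "u w < 0" using False by simp
      then have "u w * exp (s * u w) < 0" by (simp add: mult_neg_pos)
      then show ?thesis using True unfolding Pp_def by simp
    qed (simp add: Pp_def)
    then show ?thesis using Pnn by simp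
  qed
  have IPmono: "IP s \<le> IP t" if "s \<le> t" for s t
    unfolding IP_def by (rule nn_integral_mono, rule ennreal_leI, rule Pmono[OF that])
  have IPT: "IP (T m) \<le> IN 1" for m
  proof (rule ennreal_le_epsilon)
    fix e :: real assume e: "0 < e"
    define n where "n = max m (nat \<lceil>8 / e\<rceil>)"
    have n1: "m \<le> n" unfolding n_def by simp
    have "8 / e \<le> real (nat \<lceil>8 / e\<rceil>)" by (rule real_nat_ceiling_ge)
    also have "\<dots> \<le> real n" unfolding n_def by simp
    finally have n: "m \<le> n" "8 / e \<le> real n" using n1 by auto
    have "8 \<le> e * real n" using n(2) e by (simp add: field_simps)
    then have "8 * inverse (real (Suc (Suc n))) \<le> e" using e by (simp add: field_simps)
    then have le: "8 * (1 - T n) \<le> e" unfolding T_def by simp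
    have "IP (T m) \<le> IP (T n)" by (rule IPmono[OF Tmono[OF n(1)]])
    also have "\<dots> \<le> IN 1 + ennreal (8 * (1 - T n))" by (rule key[OF T(1) T(2)])
    also have "\<dots> \<le> IN 1 + ennreal e" using le by (intro add_left_mono ennreal_leI)
    finally show "IP (T m) \<le> IN 1 + ennreal e" .
  qed
  have Tlim: "T \<longlonglongrightarrow> 1"
  proof -
    have "(\<lambda>n. inverse (real (Suc (Suc n)))) \<longlonglongrightarrow> 0"
      using LIMSEQ_Suc[OF LIMSEQ_inverse_real_of_nat] by simp
    then have "(\<lambda>n. 1 - inverse (real (Suc (Suc n)))) \<longlonglongrightarrow> 1 - 0" by (intro tendsto_intros)
    then show ?thesis unfolding T_def[abs_def] by simp
  qed
  have inc: "incseq (\<lambda>n w. ennreal (Pp (T n) w))"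
    by (auto simp: incseq_def le_fun_def intro!: ennreal_leI Pmono Tmono)
  have ptw: "(SUP n. ennreal (Pp (T n) w)) = ennreal (Pp 1 w)" for w
  proof -
    have lim1: "(\<lambda>n. ennreal (Pp (T n) w)) \<longlonglongrightarrow> ennreal (Pp 1 w)"
    proof (rule tendsto_ennrealI)
      show "(\<lambda>n. Pp (T n) w) \<longlonglongrightarrow> Pp 1 w"
      proof (cases "fi w")
        case True
        have "(\<lambda>n. max (u w * exp (T n * u w)) 0) \<longlonglongrightarrow> max (u w * exp (1 * u w)) 0"
          by (intro tendsto_intros Tlim)
        then show ?thesis using True unfolding Pp_def by simp
      next
        case False then show ?thesis unfolding Pp_def by simp
      qed
    qed
    have lim2: "(\<lambda>n. ennreal (Pp (T n) w)) \<longlonglongrightarrow> (SUP n. ennreal (Pp (T n) w))"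
      by (rule LIMSEQ_SUP) (use inc in \<open>auto simp: incseq_def le_fun_def\<close>)
    show ?thesis using LIMSEQ_unique[OF lim2 lim1] .
  qed
  have "IP 1 = (\<integral>\<^sup>+w. (SUP n. ennreal (Pp (T n) w)) \<partial>Q)" unfolding IP_def ptw ..
  also have "\<dots> = (SUP n. IP (T n))" unfolding IP_def
    by (rule nn_integral_monotone_convergence_SUP[OF inc]) simp
  also have "\<dots> \<le> IN 1" by (rule SUP_least) (rule IPT)
  finally have "IP 1 \<le> IN 1" .
  moreover have "epos Q (\<lambda>w. y0 w * eexp (y0 w)) = IP 1"
    unfolding epos_def IP_def by (rule nn_integral_cong_AE[OF Peq])
  moreover have "eneg Q (\<lambda>w. y0 w * eexp (y0 w)) = IN 1"
    unfolding eneg_def IN_def by (rule nn_integral_cong_AE[OF Neq])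
  ultimately show ?thesis by simp
qed


theorem lemma3p2:
  fixes Q :: "'a measure" and K :: "('a \<Rightarrow> real) set" and y0 :: "'a \<Rightarrow> ereal"
  assumes "prob_space Q"
    and "K \<subseteq> {x. integrable Q x}"
    and "L1_closed Q K"
    and "convex_cone_fun K"
    and "y0 \<in> dual_cone Q K"
    and "\<forall>y\<in>dual_cone Q K. objective Q y0 \<le> objective Q y"
  shows "eint_defined Q (\<lambda>w. y0 w * eexp (y0 w)) \<and> eint Q (\<lambda>w. y0 w * eexp (y0 w)) = 0 \<and>
         (\<forall>y\<in>dual_cone Q K. eint_defined Q (\<lambda>w. y w * eexp (y0 w)) \<and>
           eint Q (\<lambda>w. y w * eexp (y0 w)) \<ge> 0)"
proof -
  note Q = assms(1) and KI = assms(2) and cl = assms(3) and cc = assms(4) and y0C = assms(5)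
  interpret prob_space Q by (rule Q)
  have y0M[measurable]: "y0 \<in> borel_measurable Q" using y0C unfolding dual_cone_def by auto
  have opt: "\<And>y. y \<in> dual_cone Q K \<Longrightarrow> objective Q y0 \<le> objective Q y" using assms(6) by auto
  define I0 where "I0 = (\<integral>\<^sup>+w. e2ennreal (eexp (y0 w)) \<partial>Q)"
  show ?thesis
  proof (cases "I0 = 0")
    case True
    then show ?thesis using case_zero[OF y0M] unfolding I0_def by blast
  next
    case False
    note I0ne = False
    have Kne: "K \<noteq> {}"
    proof
      assume K0: "K = {}"
      have "(\<lambda>w. -\<infinity>) \<in> dual_cone Q K" unfolding dual_cone_def K0 by simp
      then have "objective Q y0 \<le> objective Q (\<lambda>w. -\<infinity>)" by (rule opt)
      also have "objective Q (\<lambda>w. -\<infinity>) = -\<infinity>" unfolding objective_def eln_def by simp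
      finally have "I0 = 0" unfolding objective_def I0_def by (rule eln_minf)
      then show False using I0ne by simp
    qed
    have zeroC: "(\<lambda>w. 0) \<in> dual_cone Q K"
    proof -
      have "eint_defined Q (\<lambda>w. ereal (x w) * 0) \<and> eint Q (\<lambda>w. ereal (x w) * 0) = 0" for x
        by (rule eint_AE_zero) auto
      then show ?thesis unfolding dual_cone_def by auto
    qed
    have obj0: "objective Q (\<lambda>w. 0) = 0"
    proof -
      have "eexp 0 = 1" using eexp_simps(1)[of 0] by (simp add: zero_ereal_def one_ereal_def)
      moreover have "e2ennreal (1::ereal) = 1" by (simp add: one_ereal_def e2ennreal_ereal)
      ultimately have "(\<integral>\<^sup>+w. e2ennreal (eexp 0) \<partial>Q) = 1" by (simp add: emeasure_space_1)
      then show ?thesis unfolding objective_def eln_def by simp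
    qed
    have "eln I0 \<le> 0" using opt[OF zeroC] obj0 unfolding objective_def I0_def by simp
    then have I0fin: "I0 \<noteq> \<infinity>" by (rule eln_le0)
    have y0fin: "AE w in Q. y0 w \<noteq> \<infinity>"
    proof -
      have "AE w in Q. e2ennreal (eexp (y0 w)) \<noteq> \<infinity>"
        by (rule nn_integral_PInf_AE) (use I0fin I0_def in auto)
      then show ?thesis by eventually_elim auto
    qed
    define z where "z w = real_of_ereal (eexp (y0 w))" for w
    have zM[measurable]: "z \<in> borel_measurable Q" unfolding z_def by measurable
    have znn: "0 \<le> z w" for w unfolding z_def using eexp_nonneg[of "y0 w"] by (simp add: real_of_ereal_pos)
    have ez: "AE w in Q. eexp (y0 w) = ereal (z w)"
      using y0fin by eventually_elim (auto simp: z_def eexp_def split: ereal.splits)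
    have Iz: "I0 = (\<integral>\<^sup>+w. ennreal (z w) \<partial>Q)"
      unfolding I0_def by (rule nn_integral_cong_AE) (use ez in \<open>eventually_elim, simp\<close>)
    have zI: "integrable Q z"
      by (rule integrableI_nonneg) (use znn Iz I0fin in \<open>auto simp: less_top\<close>)
    have intz: "I0 = ennreal (\<integral>w. z w \<partial>Q)" unfolding Iz by (rule nn_integral_eq_integral[OF zI]) (use znn in auto)
    have Zpos: "0 < (\<integral>w. z w \<partial>Q)"
    proof -
      have "0 \<le> (\<integral>w. z w \<partial>Q)" using znn by simp
      moreover have "(\<integral>w. z w \<partial>Q) \<noteq> 0" using intz I0ne by auto
      ultimately show ?thesis by simp
    qed
    have I0pos: "0 < I0" using I0ne by (simp add: zero_less_iff_neq_zero)
    have I0lt: "I0 < \<infinity>" using I0fin by (simp add: less_top)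
    have zK: "z \<in> K"
    proof (rule ccontr)
      assume zK: "z \<notin> K"
      obtain \<phi> :: "('a \<Rightarrow> real) \<Rightarrow> real" where
        ph_add: "\<And>x y. integrable Q x \<Longrightarrow> integrable Q y \<Longrightarrow> \<phi> (\<lambda>v. x v + y v) = \<phi> x + \<phi> y"
        and ph_sc: "\<And>x c. integrable Q x \<Longrightarrow> \<phi> (\<lambda>v. c * x v) = c * \<phi> x"
        and ph_bd: "\<And>x. integrable Q x \<Longrightarrow> \<bar>\<phi> x\<bar> \<le> (\<integral>w. \<bar>x w\<bar> \<partial>Q)"
        and ph_K: "\<And>k. k \<in> K \<Longrightarrow> \<phi> k \<le> 0" and ph_z: "\<phi> z > 0"
        using sep_functional[OF Q KI cl cc Kne zI zK] by blast
      obtain g where gM[measurable]: "g \<in> borel_measurable Q" and gb: "\<And>w. \<bar>g w\<bar> \<le> 1"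
        and gphi: "\<And>x. integrable Q x \<Longrightarrow> \<phi> x = (\<integral>w. g w * x w \<partial>Q)"
        using represent[OF Q ph_add ph_sc ph_bd] by blast
      define c where "c = (\<integral>w. g w * z w \<partial>Q)"
      define Z where "Z = (\<integral>w. z w \<partial>Q)"
      have cpos: "0 < c" using ph_z gphi[OF zI] unfolding c_def by simp
      have Zpos': "0 < Z" using Zpos unfolding Z_def .
      define s where "s = min 1 (c / (2 * Z))"
      have s: "0 < s" "s \<le> 1" "s \<le> c / (2 * Z)" unfolding s_def using cpos Zpos' by auto
      define h where "h w = - (s * g w)" for w
      have hM[measurable]: "h \<in> borel_measurable Q" unfolding h_def by measurable
      have hb: "\<bar>h w\<bar> \<le> s" for w
        unfolding h_def using gb[of w] s by (simp add: abs_mult mult_left_le_one_le)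
      have hK: "0 \<le> (\<integral>w. x w * h w \<partial>Q)" if x: "x \<in> K" for x
      proof -
        have "(\<lambda>w. x w * h w) = (\<lambda>w. - s * (g w * x w))" unfolding h_def by (auto simp: fun_eq_iff)
        then have "(\<integral>w. x w * h w \<partial>Q) = - s * (\<integral>w. g w * x w \<partial>Q)" by simp
        moreover have "(\<integral>w. g w * x w \<partial>Q) \<le> 0" using ph_K[OF x] gphi[of x] KI x by auto
        ultimately show ?thesis using s by (simp add: mult_nonneg_nonpos)
      qed
      have ysC: "(\<lambda>w. y0 w + ereal (h w)) \<in> dual_cone Q K"
        by (rule pert_mem[OF KI y0C hM hb hK])
      have "eln I0 \<le> eln (\<integral>\<^sup>+w. e2ennreal (eexp (y0 w + ereal (h w))) \<partial>Q)"
        using opt[OF ysC] unfolding objective_def I0_def .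
      then have le1: "I0 \<le> (\<integral>\<^sup>+w. e2ennreal (eexp (y0 w + ereal (h w))) \<partial>Q)"
        by (rule eln_le_imp[OF I0pos I0lt])
      have "(\<integral>\<^sup>+w. e2ennreal (eexp (y0 w + ereal (h w))) \<partial>Q) = (\<integral>\<^sup>+w. ennreal (z w * exp (h w)) \<partial>Q)"
      proof (rule nn_integral_cong_AE)
        show "AE w in Q. e2ennreal (eexp (y0 w + ereal (h w))) = ennreal (z w * exp (h w))"
          using y0fin
        proof eventually_elim
          fix w assume "y0 w \<noteq> \<infinity>"
          then show "e2ennreal (eexp (y0 w + ereal (h w))) = ennreal (z w * exp (h w))"
            by (cases "y0 w") (auto simp: z_def exp_add)
        qed
      qed
      also have "\<dots> \<le> (\<integral>\<^sup>+w. ennreal ((1 + s\<^sup>2) * z w - s * (g w * z w)) \<partial>Q)"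
      proof (rule nn_integral_mono, rule ennreal_leI)
        fix w
        have "\<bar>h w\<bar> \<le> 1" using hb[of w] s by simp
        then have "exp (h w) \<le> 1 + h w + (h w)\<^sup>2" by (rule exp_quad_bound)
        also have "(h w)\<^sup>2 \<le> s\<^sup>2"
        proof -
          have "\<bar>h w\<bar>\<^sup>2 \<le> s\<^sup>2" using hb[of w] by (intro power_mono) auto
          then show ?thesis by simp
        qed
        finally have "exp (h w) \<le> 1 + h w + s\<^sup>2" by simp
        then have "z w * exp (h w) \<le> z w * (1 + h w + s\<^sup>2)" using znn[of w] by (rule mult_left_mono)
        also have "\<dots> = (1 + s\<^sup>2) * z w - s * (g w * z w)" unfolding h_def by (simp add: algebra_simps)
        finally show "z w * exp (h w) \<le> (1 + s\<^sup>2) * z w - s * (g w * z w)" .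
      qed
      also have "\<dots> = ennreal (\<integral>w. (1 + s\<^sup>2) * z w - s * (g w * z w) \<partial>Q)"
      proof (rule nn_integral_eq_integral)
        have gzI: "integrable Q (\<lambda>w. g w * z w)"
        proof (rule Bochner_Integration.integrable_bound[OF zI])
          show "(\<lambda>w. g w * z w) \<in> borel_measurable Q" by measurable
          show "AE w in Q. norm (g w * z w) \<le> norm (z w)"
          proof (rule AE_I2)
            fix w have "\<bar>g w\<bar> * \<bar>z w\<bar> \<le> 1 * \<bar>z w\<bar>" by (rule mult_right_mono[OF gb]) simp
            then show "norm (g w * z w) \<le> norm (z w)" by (simp add: abs_mult)
          qed
        qed
        show "integrable Q (\<lambda>w. (1 + s\<^sup>2) * z w - s * (g w * z w))" using zI gzI by auto
        show "AE w in Q. 0 \<le> (1 + s\<^sup>2) * z w - s * (g w * z w)"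
        proof (rule AE_I2)
          fix w
          have "s * (g w * z w) \<le> s * z w"
          proof -
            have "g w * z w \<le> 1 * z w" using gb[of w] znn[of w] by (intro mult_right_mono) auto
            then show ?thesis using s by (intro mult_left_mono) auto
          qed
          moreover have "s * z w \<le> (1 + s\<^sup>2) * z w"
          proof -
            have s2: "s \<le> 1 + s\<^sup>2" using s(2) zero_le_power2[of s] by linarith
            show ?thesis by (rule mult_right_mono[OF s2 znn])
          qed
          ultimately show "0 \<le> (1 + s\<^sup>2) * z w - s * (g w * z w)" by simp
        qed
      qed
      also have "(\<integral>w. (1 + s\<^sup>2) * z w - s * (g w * z w) \<partial>Q) = (1 + s\<^sup>2) * Z - s * c"
      proof -
        have gzI: "integrable Q (\<lambda>w. g w * z w)"
        proof (rule Bochner_Integration.integrable_bound[OF zI])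
          show "(\<lambda>w. g w * z w) \<in> borel_measurable Q" by measurable
          show "AE w in Q. norm (g w * z w) \<le> norm (z w)"
          proof (rule AE_I2)
            fix w have "\<bar>g w\<bar> * \<bar>z w\<bar> \<le> 1 * \<bar>z w\<bar>" by (rule mult_right_mono[OF gb]) simp
            then show "norm (g w * z w) \<le> norm (z w)" by (simp add: abs_mult)
          qed
        qed
        have "(\<integral>w. (1 + s\<^sup>2) * z w - s * (g w * z w) \<partial>Q) = (\<integral>w. (1 + s\<^sup>2) * z w \<partial>Q) - (\<integral>w. s * (g w * z w) \<partial>Q)"
          by (rule Bochner_Integration.integral_diff) (use zI gzI in auto)
        then show ?thesis unfolding Z_def c_def by simp
      qed
      finally have "ennreal Z \<le> ennreal ((1 + s\<^sup>2) * Z - s * c)"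
        using le1 intz unfolding Z_def by simp
      then have "Z \<le> (1 + s\<^sup>2) * Z - s * c"
      proof (cases "0 \<le> (1 + s\<^sup>2) * Z - s * c")
        case True
        then show ?thesis using \<open>ennreal Z \<le> ennreal ((1 + s\<^sup>2) * Z - s * c)\<close> by (simp add: ennreal_le_iff)
      next
        case False
        then have "ennreal ((1 + s\<^sup>2) * Z - s * c) = 0" by (simp add: ennreal_neg)
        then have "ennreal Z \<le> 0" using \<open>ennreal Z \<le> ennreal ((1 + s\<^sup>2) * Z - s * c)\<close> by simp
        then show ?thesis using Zpos' by simp
      qed
      then have "s * c \<le> s * (s * Z)" by (simp add: algebra_simps power2_eq_square)
      then have "c \<le> s * Z" using s by simp
      also have "\<dots> \<le> c / (2 * Z) * Z" using s Zpos' by (intro mult_right_mono) auto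
      also have "\<dots> = c / 2" using Zpos' by simp
      finally show False using cpos by simp
    qed
    have conc2: "eint_defined Q (\<lambda>w. y w * eexp (y0 w)) \<and> 0 \<le> eint Q (\<lambda>w. y w * eexp (y0 w))"
      if y: "y \<in> dual_cone Q K" for y
    proof -
      have yM[measurable]: "y \<in> borel_measurable Q" using y unfolding dual_cone_def by auto
      have h: "eint_defined Q (\<lambda>w. ereal (z w) * y w) \<and> 0 \<le> eint Q (\<lambda>w. ereal (z w) * y w)"
        using y zK unfolding dual_cone_def by auto
      have ae: "AE w in Q. y w * eexp (y0 w) = ereal (z w) * y w"
        using ez by eventually_elim (simp add: mult.commute)
      have m1: "(\<lambda>w. y w * eexp (y0 w)) \<in> borel_measurable Q" by measurable
      have m2: "(\<lambda>w. ereal (z w) * y w) \<in> borel_measurable Q" by measurable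
      show ?thesis using h eint_cong_AE[OF m1 m2 ae] by simp
    qed
    define G where "G w = y0 w * eexp (y0 w)" for w
    have GM[measurable]: "G \<in> borel_measurable Q" unfolding G_def by measurable
    have "eint_defined Q G \<and> 0 \<le> eint Q G" using conc2[OF y0C] unfolding G_def .
    then have nG: "eneg Q G < \<infinity>" "eneg Q G \<le> epos Q G" using eint_nonneg_iff[OF GM] by auto
    have pG: "epos Q G \<le> eneg Q G" unfolding G_def
    proof (rule scaling_deriv[OF Q y0M y0fin])
      show "(\<integral>\<^sup>+w. e2ennreal (eexp (y0 w)) \<partial>Q) < \<infinity>" using I0lt unfolding I0_def .
      fix t :: real assume t: "0 < t" "t < 1"
      have tC: "(\<lambda>w. ereal t * y0 w) \<in> dual_cone Q K" by (rule scale_mem[OF KI y0C]) (use t in simp)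
      have "eln I0 \<le> eln (\<integral>\<^sup>+w. e2ennreal (eexp (ereal t * y0 w)) \<partial>Q)"
        using opt[OF tC] unfolding objective_def I0_def .
      then show "(\<integral>\<^sup>+w. e2ennreal (eexp (y0 w)) \<partial>Q) \<le> (\<integral>\<^sup>+w. e2ennreal (eexp (ereal t * y0 w)) \<partial>Q)"
        using eln_le_imp[OF I0pos I0lt] unfolding I0_def by blast
    qed
    have "eint_defined Q G \<and> eint Q G = 0" by (rule eint_zero[OF GM nG(1)]) (use nG pG in simp)
    then show ?thesis using conc2 unfolding G_def by auto
  qed
qed


end
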